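(* Let $n,k$ be integers with $2\le k<n/2$. The space of equiangular Gutkin $(n,k)$-gons, modulo the group of similarities, is identified (via the side lengths) with the intersection of an $M$-dimensional affine subspace with the positive orthant $\mathbb{R}^n_+$, where $M$ is the number of integers $r$ with $2\le r\le n-2$ satisfying $$\tan\Big(\frac{kr\pi}{n}\Big)\tan\Big(\frac{\pi}{n}\Big)=\tan\Big(\frac{k\pi}{n}\Big)\tan\Big(\frac{r\pi}{n}\Big).$$
   Context: Let $P$ be a convex $n$-gon in the Euclidean plane with vertices $v_0,\dots,v_{n-1}$ in their cyclic (counterclockwise) order, indices taken modulo $n$. $P$ is a Gutkin $(n,k)$-gon if there exists an angle $\alpha$ such that for every $i$, $\angle v_{i+1}v_iv_{i+k}=\angle v_{i+k-1}v_{i+k}v_i=\alpha$, where $\angle abc$ denotes the angle at $b$ between the segments $ba$ and $bc$. Equiangular means all interior angles are equal; the side lengths are $|v_{i+1}-v_i|$, $0\le i\le n-1$. *)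

theory Defs
  imports Complex_Main
begin

text \<open>Polygons are given by their vertices v 0, ..., v (n-1) as complex numbers
  (points of the Euclidean plane); indices are taken modulo n via vtx.\<close>

definition vtx :: "nat \<Rightarrow> (nat \<Rightarrow> complex) \<Rightarrow> nat \<Rightarrow> complex" where
  "vtx n v i = v (i mod n)"

definition ang :: "complex \<Rightarrow> complex \<Rightarrow> complex \<Rightarrow> real" where
  "ang a b c = arccos (Re (cnj (a - b) * (c - b)) / (cmod (a - b) * cmod (c - b)))"

definition convex_ccw_polygon :: "nat \<Rightarrow> (nat \<Rightarrow> complex) \<Rightarrow> bool" where
  "convex_ccw_polygon n v \<longleftrightarrow> 3 \<le> n \<and>
     (\<forall>i<n. \<forall>j<n. i \<noteq> j \<longrightarrow> v i \<noteq> v j) \<and>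
     (\<forall>i<n. \<forall>j<n. j \<noteq> i \<longrightarrow> j \<noteq> (i + 1) mod n \<longrightarrow>
        Im (cnj (vtx n v (i + 1) - vtx n v i) * (vtx n v j - vtx n v i)) > 0)"

definition interior_angle :: "nat \<Rightarrow> (nat \<Rightarrow> complex) \<Rightarrow> nat \<Rightarrow> real" where
  "interior_angle n v i = ang (vtx n v (i + n - 1)) (vtx n v i) (vtx n v (i + 1))"

definition equiangular :: "nat \<Rightarrow> (nat \<Rightarrow> complex) \<Rightarrow> bool" where
  "equiangular n v \<longleftrightarrow> (\<forall>i<n. \<forall>j<n. interior_angle n v i = interior_angle n v j)"

definition gutkin :: "nat \<Rightarrow> nat \<Rightarrow> (nat \<Rightarrow> complex) \<Rightarrow> bool" where
  "gutkin n k v \<longleftrightarrow> convex_ccw_polygon n v \<and>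
     (\<exists>\<alpha>. \<forall>i<n.
        ang (vtx n v (i + 1)) (vtx n v i) (vtx n v (i + k)) = \<alpha> \<and>
        ang (vtx n v (i + k - 1)) (vtx n v (i + k)) (vtx n v i) = \<alpha>)"

definition side_lengths :: "nat \<Rightarrow> (nat \<Rightarrow> complex) \<Rightarrow> nat \<Rightarrow> real" where
  "side_lengths n v = (\<lambda>i. if i < n then cmod (vtx n v (i + 1) - vtx n v i) else 0)"

text \<open>Similarity of labelled polygons (orientation-preserving similarity z |-> a z + b).\<close>
definition similar_polys :: "nat \<Rightarrow> (nat \<Rightarrow> complex) \<Rightarrow> (nat \<Rightarrow> complex) \<Rightarrow> bool" where
  "similar_polys n v w \<longleftrightarrow> (\<exists>a b. a \<noteq> 0 \<and> (\<forall>i<n. w i = a * v i + b))"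

text \<open>When all tangents are defined it is used literally; otherwise (some cosine vanishes)
  the equation is read after clearing denominators (i.e. in the projective sense).\<close>
definition tan_cond :: "nat \<Rightarrow> nat \<Rightarrow> nat \<Rightarrow> bool" where
  "tan_cond n k r \<longleftrightarrow>
     (let A = real (k * r) * pi / real n; B = real k * pi / real n;
          C = real r * pi / real n; D = pi / real n in
      if cos A \<noteq> 0 \<and> cos B \<noteq> 0 \<and> cos C \<noteq> 0 \<and> cos D \<noteq> 0
      then tan A * tan D = tan B * tan C
      else sin A * cos B * cos C * sin D = cos A * sin B * sin C * cos D)"

definition gutkin_M :: "nat \<Rightarrow> nat \<Rightarrow> nat" where
  "gutkin_M n k = card {r. 2 \<le> r \<and> r \<le> n - 2 \<and> tan_cond n k r}"

definition param_affine :: "(nat \<Rightarrow> real) \<Rightarrow> (nat \<Rightarrow> nat \<Rightarrow> real) \<Rightarrow> nat \<Rightarrow> (nat \<Rightarrow> real) set" where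
  "param_affine p b m = {x. \<exists>c :: nat \<Rightarrow> real. x = (\<lambda>i. p i + (\<Sum>j<m. c j * b j i))}"

end

theory Submission
  imports Defs
begin


lemma cis_int_period: "cis (x + 2*pi*of_int m) = cis x"
proof -
  have "cis (2*pi*of_int m) = 1" by (rule cis_multiple_2pi) simp
  then show ?thesis by (simp add: cis_mult[symmetric])
qed

lemma root_sum:
  fixes m :: int assumes n: "n > 0"
  shows "(\<Sum>i<n. cis (2*pi*of_int m*real i/real n)) = (if int n dvd m then of_nat n else 0)"
proof -
  define z where "z = cis (2*pi*of_int m/real n)"
  have e: "cis (2*pi*of_int m*real i/real n) = z ^ i" for i
    by (simp add: z_def DeMoivre mult_ac)
  have zn: "z ^ n = 1"
  proof -
    have "z ^ n = cis (2*pi*of_int m)" using n by (simp add: z_def DeMoivre)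
    also have "\<dots> = 1" by (rule cis_multiple_2pi) simp
    finally show ?thesis .
  qed
  show ?thesis
  proof cases
    assume "int n dvd m"
    then obtain q where q: "m = int n * q" by (auto simp: dvd_def)
    have "2*pi*of_int m/real n = 2*pi*of_int q" using n by (simp add: q)
    then have "z = 1" unfolding z_def by (metis cis_multiple_2pi Ints_of_int)
    then show ?thesis using \<open>int n dvd m\<close> by (simp add: e)
  next
    assume nd: "\<not> int n dvd m"
    have "z \<noteq> 1"
    proof
      assume "z = 1"
      then have "cos (2*pi*of_int m/real n) = 1" by (metis z_def cis.sel(1) one_complex.sel(1))
      then obtain q :: int where "2*pi*of_int m/real n = of_int q*2*pi" by (auto simp: cos_one_2pi_int)
      then have "of_int m = real n * of_int q" using n by (simp add: field_simps)
      then have "m = int n * q" by (metis of_int_eq_iff of_int_mult of_int_of_nat_eq)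
      then show False using nd by simp
    qed
    then show ?thesis using nd by (simp add: e geometric_sum zn)
  qed
qed

lemma cos_root_sum:
  fixes m :: int assumes n: "n > 0"
  shows "(\<Sum>i<n. cos (2*pi*of_int m*real i/real n)) = (if int n dvd m then real n else 0)"
proof -
  have "(\<Sum>i<n. cos (2*pi*of_int m*real i/real n)) = Re (\<Sum>i<n. cis (2*pi*of_int m*real i/real n))"
    by (simp add: Re_sum)
  then show ?thesis using root_sum[OF n, of m] by (simp split: if_splits)
qed

lemma sin_root_sum:
  fixes m :: int assumes n: "n > 0"
  shows "(\<Sum>i<n. sin (2*pi*of_int m*real i/real n)) = 0"
proof -
  have "(\<Sum>i<n. sin (2*pi*of_int m*real i/real n)) = Im (\<Sum>i<n. cis (2*pi*of_int m*real i/real n))"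
    by (simp add: Im_sum)
  then show ?thesis using root_sum[OF n, of m] by (simp split: if_splits)
qed

definition hart :: "nat \<Rightarrow> nat \<Rightarrow> nat \<Rightarrow> real" where
  "hart n r i = cos (2*pi*real r*real i/real n) + sin (2*pi*real r*real i/real n)"

lemma hart_sym: "hart n r i = hart n i r"
  by (simp add: hart_def mult_ac)

lemma hart_prod: "hart n r i * hart n q i =
   cos (2*pi*of_int (int r - int q)*real i/real n) + sin (2*pi*of_int (int r + int q)*real i/real n)"
proof -
  define a where "a = 2*pi*real r*real i/real n"
  define b where "b = 2*pi*real q*real i/real n"
  have 1: "2*pi*of_int (int r - int q)*real i/real n = a - b"
    by (simp add: a_def b_def algebra_simps diff_divide_distrib)
  have 2: "2*pi*of_int (int r + int q)*real i/real n = a + b"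
    by (simp add: a_def b_def algebra_simps add_divide_distrib)
  show ?thesis unfolding 1 2 hart_def a_def[symmetric] b_def[symmetric] by (simp add: cos_diff sin_add algebra_simps)
qed

lemma int_dvd_diff_small: "r < n \<Longrightarrow> q < n \<Longrightarrow> int n dvd (int r - int q) \<longleftrightarrow> r = q"
proof
  assume "r < n" "q < n" "int n dvd (int r - int q)"
  show "r = q"
  proof (rule ccontr)
    assume "r \<noteq> q"
    then have "int r - int q \<noteq> 0" by simp
    from dvd_imp_le_int[OF this \<open>int n dvd _\<close>] \<open>r<n\<close> \<open>q<n\<close> show False by linarith
  qed
qed simp

lemma hart_orth:
  assumes "r < n" "q < n"
  shows "(\<Sum>i<n. hart n r i * hart n q i) = (if r = q then real n else 0)"
proof -
  have n: "n > 0" using assms by simp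
  have "(\<Sum>i<n. hart n r i * hart n q i) = (\<Sum>i<n. cos (2*pi*of_int (int r - int q)*real i/real n))
      + (\<Sum>i<n. sin (2*pi*of_int (int r + int q)*real i/real n))"
    by (simp add: hart_prod sum.distrib)
  also have "\<dots> = (if r = q then real n else 0)"
    by (subst cos_root_sum[OF n], subst sin_root_sum[OF n]) (simp add: int_dvd_diff_small[OF assms])
  finally show ?thesis .
qed

lemma hart_expand:
  assumes "i < n"
  shows "f i = (\<Sum>r<n. (\<Sum>j<n. f j * hart n r j) * hart n r i) / real n"
proof -
  have "(\<Sum>r<n. (\<Sum>j<n. f j * hart n r j) * hart n r i) = (\<Sum>j<n. f j * (\<Sum>r<n. hart n j r * hart n i r))"
    unfolding sum_distrib_left sum_distrib_right
    by (subst sum.swap) (simp add: hart_sym[of n _ j for j] mult_ac)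
  also have "\<dots> = (\<Sum>j<n. f j * (if j = i then real n else 0))"
    by (intro sum.cong refl) (simp add: hart_orth assms)
  also have "\<dots> = f i * real n" using assms by (simp add: if_distrib cong: if_cong)
  finally show ?thesis using assms by simp
qed



definition gw :: "nat \<Rightarrow> nat \<Rightarrow> nat \<Rightarrow> real" where
  "gw n k j = sin ((2*real j + 1 - real k)*pi/real n)"

definition gfun :: "nat \<Rightarrow> nat \<Rightarrow> (nat \<Rightarrow> real) \<Rightarrow> nat \<Rightarrow> real" where
  "gfun n k s i = (\<Sum>j<k. gw n k j * s ((i+j) mod n))"

definition mu :: "nat \<Rightarrow> nat \<Rightarrow> nat \<Rightarrow> complex" where
  "mu n k r = (\<Sum>j<k. complex_of_real (gw n k j) * cis (2*pi*real r*real j/real n))"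

lemma cis_mod:
  assumes "n > 0" and xint: "x \<in> \<int>"
  shows "cis (2*pi*x*real (m mod n)/real n) = cis (2*pi*x*real m/real n)"
proof -
  obtain q where q: "x = of_int q" using xint by (auto elim: Ints_cases)
  have "real m = real (n * (m div n) + m mod n)" by (simp only: mult.commute[of n] div_mult_mod_eq)
  then have "real m = real n * real (m div n) + real (m mod n)" by (simp only: of_nat_add of_nat_mult)
  then have "2*pi*x*real m/real n = 2*pi*x*real (m mod n)/real n + 2*pi*of_int (q * int (m div n))"
    using assms by (simp add: q field_simps)
  note eq = this
  show ?thesis unfolding eq cis_int_period by (rule refl)
qed

lemma hart_mod:
  assumes "n > 0" shows "hart n r (m mod n) = hart n r m"
proof -
  have "cis (2*pi*real r*real (m mod n)/real n) = cis (2*pi*real r*real m/real n)"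
    by (rule cis_mod[OF assms]) simp
  then have "cos (2*pi*real r*real (m mod n)/real n) = cos (2*pi*real r*real m/real n)"
       "sin (2*pi*real r*real (m mod n)/real n) = sin (2*pi*real r*real m/real n)"
    by (metis cis.sel(1), metis cis.sel(2))
  then show ?thesis by (simp add: hart_def)
qed

lemma sum_shift_mod:
  fixes j n :: nat and g :: "nat \<Rightarrow> 'a::comm_monoid_add"
  assumes "n > 0"
  shows "(\<Sum>i<n. g ((i + j) mod n)) = (\<Sum>i<n. (g i :: 'a::comm_monoid_add))"
proof (induction j arbitrary: g)
  case 0
  show ?case by (intro sum.cong refl) simp
next
  case (Suc j)
  have one: "(\<Sum>i<n. h ((i + 1) mod n)) = (\<Sum>i<n. h i)" for h :: "nat \<Rightarrow> 'a"
  proof -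
    obtain m where m: "n = Suc m" using assms by (cases n) auto
    have "(\<Sum>i<n. h ((i + 1) mod n)) = (\<Sum>i<m. h (i+1)) + h 0"
      unfolding m by (simp add: sum.lessThan_Suc)
    also have "\<dots> = (\<Sum>i<n. h i)" unfolding m by (subst sum.lessThan_Suc_shift) (simp add: add.commute)
    finally show ?thesis .
  qed
  have "(\<Sum>i<n. g ((i + Suc j) mod n)) = (\<Sum>i<n. (\<lambda>x. g ((x+1) mod n)) ((i + j) mod n))"
    by (intro sum.cong refl) (simp add: mod_Suc_eq)
  also have "\<dots> = (\<Sum>i<n. g ((i+1) mod n))" by (rule Suc.IH)
  also have "\<dots> = (\<Sum>i<n. g i)" by (rule one)
  finally show ?case .
qed

lemma gfun_hart:
  assumes n: "n > 0" and "mu n k r = 0"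
  shows "gfun n k (hart n r) i = 0"
proof -
  have "gfun n k (hart n r) i = (\<Sum>j<k. gw n k j * hart n r (i+j))"
    unfolding gfun_def by (simp add: hart_mod[OF n])
  also have "\<dots> = Re ((1 - \<i>) * cis (2*pi*real r*real i/real n) * mu n k r)"
  proof -
    have "Re ((1 - \<i>) * cis (2*pi*real r*real i/real n) * (complex_of_real (gw n k j) * cis (2*pi*real r*real j/real n)))
       = gw n k j * hart n r (i+j)" for j
    proof -
      have e: "2*pi*real r*real i/real n + 2*pi*real r*real j/real n = 2*pi*real r*real (i+j)/real n"
        unfolding add_divide_distrib[symmetric] by (simp add: algebra_simps)
      have "(1 - \<i>) * cis (2*pi*real r*real i/real n) * (complex_of_real (gw n k j) * cis (2*pi*real r*real j/real n))
          = complex_of_real (gw n k j) * ((1 - \<i>) * cis (2*pi*real r*real (i+j)/real n))"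
      proof -
        have c: "cis (2*pi*real r*real i/real n) * cis (2*pi*real r*real j/real n) = cis (2*pi*real r*real (i+j)/real n)"
          by (simp only: cis_mult e)
        show ?thesis by (subst c[symmetric]) (simp only: ac_simps)
      qed
      then show ?thesis by (simp only:) (simp add: hart_def)
    qed
    note T = this
    show ?thesis unfolding mu_def sum_distrib_left Re_sum
      by (intro sum.cong refl) (rule T[symmetric])
  qed
  finally show ?thesis using assms by simp
qed

lemma gfun_dft:
  assumes n: "n > 0"
  shows "(\<Sum>i<n. complex_of_real (gfun n k s i) * cis (-2*pi*real r*real i/real n))
    = mu n k r * (\<Sum>i<n. complex_of_real (s i) * cis (-2*pi*real r*real i/real n))"
proof -
  have inner: "(\<Sum>i<n. complex_of_real (s ((i+j) mod n)) * cis (-2*pi*real r*real i/real n))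
      = cis (2*pi*real r*real j/real n) * (\<Sum>i<n. complex_of_real (s i) * cis (-2*pi*real r*real i/real n))" for j
  proof -
    have "(\<Sum>i<n. complex_of_real (s ((i+j) mod n)) * cis (-2*pi*real r*real i/real n))
       = (\<Sum>i<n. cis (2*pi*real r*real j/real n) * (complex_of_real (s ((i+j) mod n)) * cis (2*pi*(- real r)*real ((i+j) mod n)/real n)))"
    proof (intro sum.cong refl)
      fix i
      have "cis (2*pi*(- real r)*real ((i+j) mod n)/real n) = cis (2*pi*(- real r)*real (i+j)/real n)"
        by (rule cis_mod[OF n]) simp
      moreover have "cis (2*pi*real r*real j/real n) * cis (2*pi*(- real r)*real (i+j)/real n) = cis (-2*pi*real r*real i/real n)"
        unfolding cis_mult add_divide_distrib[symmetric] by (simp add: algebra_simps)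
      ultimately show "complex_of_real (s ((i+j) mod n)) * cis (-2*pi*real r*real i/real n) =
          cis (2*pi*real r*real j/real n) * (complex_of_real (s ((i+j) mod n)) * cis (2*pi*(- real r)*real ((i+j) mod n)/real n))"
        by (metis mult.left_commute)
    qed
    also have "\<dots> = cis (2*pi*real r*real j/real n) * (\<Sum>i<n. (\<lambda>m. complex_of_real (s m) * cis (2*pi*(- real r)*real m/real n)) ((i+j) mod n))"
      by (simp add: sum_distrib_left)
    also have "\<dots> = cis (2*pi*real r*real j/real n) * (\<Sum>i<n. complex_of_real (s i) * cis (-2*pi*real r*real i/real n))"
      by (subst sum_shift_mod[OF n]) simp
    finally show ?thesis .
  qed
  have "(\<Sum>i<n. complex_of_real (gfun n k s i) * cis (-2*pi*real r*real i/real n))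
     = (\<Sum>j<k. complex_of_real (gw n k j) * (\<Sum>i<n. complex_of_real (s ((i+j) mod n)) * cis (-2*pi*real r*real i/real n)))"
    unfolding gfun_def of_real_sum of_real_mult sum_distrib_right sum_distrib_left
    by (subst sum.swap) (simp only: mult.assoc)
  also have "\<dots> = mu n k r * (\<Sum>i<n. complex_of_real (s i) * cis (-2*pi*real r*real i/real n))"
    unfolding inner mu_def sum_distrib_right by (simp only: mult.assoc)
  finally show ?thesis .
qed

lemma hart_coeff_zero:
  assumes n: "n > 0" and g: "\<And>i. i < n \<Longrightarrow> gfun n k s i = 0" and m: "mu n k r \<noteq> 0"
  shows "(\<Sum>j<n. s j * hart n r j) = 0"
proof -
  define sh where "sh = (\<Sum>i<n. complex_of_real (s i) * cis (-2*pi*real r*real i/real n))"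
  have "mu n k r * sh = 0"
    unfolding sh_def gfun_dft[OF n, symmetric] by (simp add: g)
  then have "sh = 0" using m by simp
  then have "Re sh - Im sh = 0" by simp
  moreover have "Re sh - Im sh = (\<Sum>j<n. s j * hart n r j)"
    unfolding sh_def Re_sum Im_sum sum_subtractf[symmetric]
    by (intro sum.cong refl) (simp add: hart_def algebra_simps)
  ultimately show ?thesis by simp
qed



lemma refl_idx: "a < k \<Longrightarrow> k - Suc (k - Suc a) = (a::nat)" by arith

lemma sum_reflect: fixes k :: nat shows "(\<Sum>j<k. f j) = (\<Sum>j<k. f (k - 1 - j))"
  by (rule sum.reindex_bij_witness[of _ "\<lambda>j. k-1-j" "\<lambda>j. k-1-j"]) (auto simp: refl_idx)

definition th :: "nat \<Rightarrow> nat \<Rightarrow> nat \<Rightarrow> real" where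
  "th n k j = (2*real j + 1 - real k)*pi/real n"

lemma th_reflect: "j < k \<Longrightarrow> th n k (k - Suc j) = - th n k j"
  by (cases "n = 0") (simp_all add: th_def of_nat_diff field_simps)

lemma P_zero: "(\<Sum>j<k. sin (th n k j) * cos (x * th n k j)) = 0"
proof -
  let ?S = "(\<Sum>j<k. sin (th n k j) * cos (x * th n k j))"
  have "?S = (\<Sum>j<k. sin (th n k (k-1-j)) * cos (x * th n k (k-1-j)))" by (rule sum_reflect)
  also have "\<dots> = (\<Sum>j<k. - (sin (th n k j) * cos (x * th n k j)))"
    by (intro sum.cong refl) (simp add: th_reflect)
  also have "\<dots> = - ?S" by (simp add: sum_negf)
  finally show ?thesis by simp
qed

definition Qs :: "nat \<Rightarrow> nat \<Rightarrow> real \<Rightarrow> real" where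
  "Qs n k x = (\<Sum>j<k. sin (th n k j) * sin (x * th n k j))"

lemma mu_split: "mu n k r = cis (real r*(real k - 1)*pi/real n) * (\<i> * complex_of_real (Qs n k (real r)))"
proof -
  have "mu n k r = (\<Sum>j<k. cis (real r*(real k - 1)*pi/real n) * (complex_of_real (sin (th n k j)) * cis (real r * th n k j)))"
    unfolding mu_def
  proof (intro sum.cong refl)
    fix j
    have "cis (real r*(real k - 1)*pi/real n) * cis (real r * th n k j) = cis (2*pi*real r*real j/real n)"
      unfolding cis_mult th_def by (rule arg_cong[where f=cis]) (cases "n = 0", simp_all add: field_simps)
    then show "complex_of_real (gw n k j) * cis (2*pi*real r*real j/real n) =
      cis (real r*(real k - 1)*pi/real n) * (complex_of_real (sin (th n k j)) * cis (real r * th n k j))"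
      by (simp add: gw_def th_def mult_ac)
  qed
  also have "\<dots> = cis (real r*(real k - 1)*pi/real n) * (\<Sum>j<k. complex_of_real (sin (th n k j)) * cis (real r * th n k j))"
    by (simp add: sum_distrib_left)
  also have "(\<Sum>j<k. complex_of_real (sin (th n k j)) * cis (real r * th n k j)) = \<i> * complex_of_real (Qs n k (real r))"
  proof (rule complex_eqI)
    show "Re (\<Sum>j<k. complex_of_real (sin (th n k j)) * cis (real r * th n k j)) = Re (\<i> * complex_of_real (Qs n k (real r)))"
      using P_zero[where n=n and k=k and x="real r"] by (simp add: Re_sum)
    show "Im (\<Sum>j<k. complex_of_real (sin (th n k j)) * cis (real r * th n k j)) = Im (\<i> * complex_of_real (Qs n k (real r)))"
      by (simp add: Im_sum Qs_def)
  qed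
  finally show ?thesis .
qed

lemma mu_zero_iff_Q: "mu n k r = 0 \<longleftrightarrow> Qs n k (real r) = 0"
  by (simp add: mu_split)

lemma dirichlet:
  "sin (x*pi/real n) * (\<Sum>j<k. cos (x * th n k j)) = sin (x*real k*pi/real n)"
proof -
  define F where "F j = sin (x*(2*real j - real k)*pi/real n)" for j :: nat
  have t: "2 * sin (x*pi/real n) * cos (x * th n k j) = F (Suc j) - F j" for j
  proof -
    have 1: "x*(2*real (Suc j) - real k)*pi/real n = x * th n k j + x*pi/real n"
      by (cases "n = 0") (simp_all add: th_def field_simps)
    have 2: "x*(2*real j - real k)*pi/real n = x * th n k j - x*pi/real n"
      by (cases "n = 0") (simp_all add: th_def field_simps)
    show ?thesis unfolding F_def 1 2 by (simp add: sin_add sin_diff)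
  qed
  have "2 * (sin (x*pi/real n) * (\<Sum>j<k. cos (x * th n k j))) = (\<Sum>j<k. F (Suc j) - F j)"
    by (simp add: sum_distrib_left t[symmetric] mult.assoc)
  also have "\<dots> = F k - F 0" by (rule sum_lessThan_telescope)
  also have "\<dots> = 2 * sin (x*real k*pi/real n)"
  proof -
    have "x*(2*real k - real k)*pi/real n = x*real k*pi/real n" by simp
    moreover have "x*(2*real 0 - real k)*pi/real n = - (x*real k*pi/real n)" by simp
    ultimately show ?thesis unfolding F_def by simp
  qed
  finally show ?thesis by simp
qed

lemma Q_as_C: "2 * Qs n k x = (\<Sum>j<k. cos ((x - 1) * th n k j)) - (\<Sum>j<k. cos ((x + 1) * th n k j))"
proof -
  have "2 * (sin t * sin (x * t)) = cos ((x - 1) * t) - cos ((x + 1) * t)" for t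
    by (simp add: algebra_simps cos_diff cos_add)
  then show ?thesis unfolding Qs_def sum_distrib_left sum_subtractf[symmetric] by simp
qed

lemma sin_pos_frac: "0 < m \<Longrightarrow> m < n \<Longrightarrow> sin (real m * pi / real n) > 0"
  by (rule sin_gt_zero) (auto simp: field_simps)

lemma Q_mid:
  assumes "2 \<le> r" "r + 2 \<le> n"
  shows "Qs n k (real r) * (sin ((real r - 1)*pi/real n) * sin ((real r + 1)*pi/real n)) =
    sin (real (k*r)*pi/real n) * cos (real k*pi/real n) * cos (real r*pi/real n) * sin (pi/real n)
    - cos (real (k*r)*pi/real n) * sin (real k*pi/real n) * sin (real r*pi/real n) * cos (pi/real n)"
proof -
  define s1 where "s1 = sin ((real r - 1)*pi/real n)"
  define s2 where "s2 = sin ((real r + 1)*pi/real n)"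
  have d1: "s1 * (\<Sum>j<k. cos ((real r - 1) * th n k j)) = sin ((real r - 1)*real k*pi/real n)"
    unfolding s1_def by (rule dirichlet)
  have d2: "s2 * (\<Sum>j<k. cos ((real r + 1) * th n k j)) = sin ((real r + 1)*real k*pi/real n)"
    unfolding s2_def by (rule dirichlet)
  define A where "A = real (k*r)*pi/real n"
  define B where "B = real k*pi/real n"
  define C where "C = real r*pi/real n"
  define D where "D = pi/real n"
  have e1: "(real r - 1)*real k*pi/real n = A - B" by (cases "n = 0") (simp_all add: A_def B_def field_simps)
  have e2: "(real r + 1)*real k*pi/real n = A + B" by (cases "n = 0") (simp_all add: A_def B_def field_simps)
  have e3: "(real r - 1)*pi/real n = C - D" by (cases "n = 0") (simp_all add: C_def D_def field_simps)
  have e4: "(real r + 1)*pi/real n = C + D" by (cases "n = 0") (simp_all add: C_def D_def field_simps)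
  have "2 * Qs n k (real r) * (s1 * s2) = s2 * (s1 * (\<Sum>j<k. cos ((real r - 1) * th n k j)))
      - s1 * (s2 * (\<Sum>j<k. cos ((real r + 1) * th n k j)))"
    unfolding Q_as_C by (simp add: algebra_simps)
  also have "\<dots> = sin (C + D) * sin (A - B) - sin (C - D) * sin (A + B)"
    unfolding d1 d2 unfolding e1 e2 s1_def s2_def e3 e4 by simp
  also have "\<dots> = 2 * (sin A * cos B * cos C * sin D - cos A * sin B * sin C * cos D)"
    by (simp add: sin_add sin_diff algebra_simps)
  finally show ?thesis unfolding s1_def s2_def A_def B_def C_def D_def by simp
qed

lemma tan_cond_iff:
  "tan_cond n k r \<longleftrightarrow>
    sin (real (k*r)*pi/real n) * cos (real k*pi/real n) * cos (real r*pi/real n) * sin (pi/real n)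
    - cos (real (k*r)*pi/real n) * sin (real k*pi/real n) * sin (real r*pi/real n) * cos (pi/real n) = 0"
proof -
  define A where "A = real (k*r)*pi/real n"
  define B where "B = real k*pi/real n"
  define C where "C = real r*pi/real n"
  define D where "D = pi/real n"
  have "tan_cond n k r \<longleftrightarrow> (if cos A \<noteq> 0 \<and> cos B \<noteq> 0 \<and> cos C \<noteq> 0 \<and> cos D \<noteq> 0
      then tan A * tan D = tan B * tan C
      else sin A * cos B * cos C * sin D = cos A * sin B * sin C * cos D)"
    unfolding tan_cond_def Let_def A_def B_def C_def D_def by (simp add: mult.commute)
  also have "\<dots> \<longleftrightarrow> sin A * cos B * cos C * sin D - cos A * sin B * sin C * cos D = 0"
    by (auto simp: tan_def field_simps)
  finally show ?thesis unfolding A_def B_def C_def D_def .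
qed

lemma mu_cnj: "mu n k (n - r) = cnj (mu n k r)" if "r \<le> n" "n > 0"
proof -
  have "cis (2*pi*real (n - r)*real j/real n) = cnj (cis (2*pi*real r*real j/real n))" for j
  proof -
    have "2*pi*real (n - r)*real j/real n = - (2*pi*real r*real j/real n) + 2*pi*of_int (int j)"
      using that by (simp add: of_nat_diff field_simps)
    note eq = this
    show ?thesis unfolding eq cis_int_period cis_cnj by (rule refl)
  qed
  then show ?thesis unfolding mu_def by (simp add: cnj_sum)
qed

lemma mu_zero_iff:
  assumes k: "2 \<le> k" "2*k < n" and r: "r < n"
  shows "mu n k r = 0 \<longleftrightarrow> r = 0 \<or> (2 \<le> r \<and> r \<le> n - 2 \<and> tan_cond n k r)"
proof -
  have n: "n > 0" using k by simp
  have Q1: "Qs n k 1 > 0"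
  proof -
    have "sin (th n k 0) \<noteq> 0"
    proof -
      have "sin (real (k - 1) * pi / real n) > 0" by (rule sin_pos_frac) (use k in auto)
      moreover have "th n k 0 = - (real (k - 1) * pi / real n)" using k by (simp add: th_def of_nat_diff field_simps)
      ultimately show ?thesis by simp
    qed
    then have "0 < sin (th n k 0) * sin (1 * th n k 0)" by (simp add: not_square_less_zero less_le)
    also have "\<dots> \<le> Qs n k 1" unfolding Qs_def
      by (rule member_le_sum) (use k in auto)
    finally show ?thesis .
  qed
  consider "r = 0" | "r = 1" | "r = n - 1" | "2 \<le> r \<and> r \<le> n - 2" using r k by linarith
  then show ?thesis
  proof cases
    case 1 then show ?thesis by (simp add: mu_zero_iff_Q Qs_def)
  next
    case 2 then show ?thesis using Q1 by (simp add: mu_zero_iff_Q)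
  next
    case 3
    have "mu n k r = cnj (mu n k 1)" using mu_cnj[of 1 n k] 3 k by simp
    then show ?thesis using Q1 3 k by (simp add: mu_zero_iff_Q)
  next
    case 4
    have s1: "sin ((real r - 1)*pi/real n) > 0"
    proof -
      have "real (r - 1) = real r - 1" using 4 by (simp add: of_nat_diff)
      moreover have "sin (real (r - 1)*pi/real n) > 0" by (rule sin_pos_frac) (use 4 k in auto)
      ultimately show ?thesis by simp
    qed
    have s2: "sin ((real r + 1)*pi/real n) > 0"
    proof -
      have "real (r + 1) = real r + 1" by simp
      moreover have "sin (real (r + 1)*pi/real n) > 0" by (rule sin_pos_frac) (use 4 k in auto)
      ultimately show ?thesis by metis
    qed
    have "mu n k r = 0 \<longleftrightarrow> Qs n k (real r) * (sin ((real r - 1)*pi/real n) * sin ((real r + 1)*pi/real n)) = 0"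
      using s1 s2 by (simp add: mu_zero_iff_Q)
    also have "\<dots> \<longleftrightarrow> tan_cond n k r"
    proof -
      have qm: "Qs n k (real r) * (sin ((real r - 1)*pi/real n) * sin ((real r + 1)*pi/real n)) =
    sin (real (k*r)*pi/real n) * cos (real k*pi/real n) * cos (real r*pi/real n) * sin (pi/real n)
    - cos (real (k*r)*pi/real n) * sin (real k*pi/real n) * sin (real r*pi/real n) * cos (pi/real n)"
        by (rule Q_mid) (use 4 k in auto)
      show ?thesis unfolding qm tan_cond_iff ..
    qed
    finally show ?thesis using 4 by auto
  qed
qed



definition E :: "nat \<Rightarrow> (nat \<Rightarrow> complex) \<Rightarrow> nat \<Rightarrow> complex" where
  "E n v i = vtx n v (Suc i) - vtx n v i"

lemma vtx_mod: "vtx n v (i mod n) = vtx n v i" by (simp add: vtx_def)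
lemma vtx_add_n: "vtx n v (i + n) = vtx n v i" by (simp add: vtx_def)
lemma vtx_lt: "i < n \<Longrightarrow> vtx n v i = v i" by (simp add: vtx_def)
lemma E_mod: "E n v (i mod n) = E n v i" by (simp add: E_def vtx_def mod_Suc_eq)
lemma E_add_n: "E n v (i + n) = E n v i"
proof -
  have "Suc (i + n) = Suc i + n" by simp
  then show ?thesis by (simp only: E_def vtx_add_n)
qed

lemma telescope: "vtx n v (i + d) - vtx n v i = (\<Sum>t<d. E n v (i + t))"
proof (induction d)
  case 0 show ?case by simp
next
  case (Suc d)
  have "vtx n v (i + Suc d) - vtx n v i = (vtx n v (i+d) - vtx n v i) + E n v (i+d)"
    by (simp add: E_def)
  then show ?case using Suc.IH by simp
qed

lemma mod_small2: "i < n \<Longrightarrow> 3 \<le> n \<Longrightarrow> (i+2) mod n \<noteq> i \<and> (i+2) mod n \<noteq> Suc i mod n"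
  by (cases "i + 2 < n"; cases "i + 2 = n"; auto simp: mod_if)

lemma Im_cnj_self: "Im (cnj z * z) = 0" by simp

lemma convex_left:
  assumes "convex_ccw_polygon n v" "i < n" "j < n" "j \<noteq> i" "j \<noteq> Suc i mod n"
  shows "Im (cnj (E n v i) * (vtx n v j - vtx n v i)) > 0"
  using assms unfolding convex_ccw_polygon_def E_def by auto

lemma convex_n: "convex_ccw_polygon n v \<Longrightarrow> 3 \<le> n"
  unfolding convex_ccw_polygon_def by auto

lemma E_nonzero:
  assumes "convex_ccw_polygon n v" shows "E n v i \<noteq> 0"
proof -
  have n: "3 \<le> n" using convex_n[OF assms] .
  let ?i = "i mod n"
  have i: "?i < n" using n by simp
  have "Suc ?i mod n \<noteq> ?i"
  proof (cases "Suc ?i < n")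
    case True then show ?thesis by simp
  next
    case False then have "Suc ?i = n" using i by simp
    then show ?thesis using n by simp
  qed
  moreover have "Suc ?i mod n < n" using n by simp
  ultimately have "v (Suc ?i mod n) \<noteq> v ?i" using assms i unfolding convex_ccw_polygon_def by blast
  then have "E n v ?i \<noteq> 0" by (simp add: E_def vtx_def)
  then show ?thesis by (simp add: E_mod)
qed

lemma left_turn:
  assumes c: "convex_ccw_polygon n v"
  shows "Im (cnj (E n v i) * E n v (Suc i)) > 0"
proof -
  have n: "3 \<le> n" using convex_n[OF c] .
  let ?i = "i mod n"
  have i: "?i < n" using n by simp
  have j1: "(?i + 2) mod n \<noteq> ?i" and j2: "(?i + 2) mod n \<noteq> Suc ?i mod n"
    using mod_small2[OF i n] by auto
  have A: "Im (cnj (E n v ?i) * (vtx n v ((?i + 2) mod n) - vtx n v ?i)) > 0"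
    by (rule convex_left[OF c i _ j1 j2]) (use n in simp)
  have B: "vtx n v ((?i + 2) mod n) - vtx n v ?i = E n v ?i + E n v (Suc ?i)"
  proof -
    have "vtx n v ((?i + 2) mod n) - vtx n v ?i = vtx n v (?i + 2) - vtx n v ?i" by (simp only: vtx_mod)
    also have "\<dots> = E n v ?i + E n v (Suc ?i)" unfolding telescope by (simp add: numeral_2_eq_2)
    finally show ?thesis .
  qed
  from A have "Im (cnj (E n v ?i) * (E n v ?i + E n v (Suc ?i))) > 0" unfolding B .
  then have "Im (cnj (E n v ?i) * E n v (Suc ?i)) > 0"
    by (simp only: distrib_left plus_complex.sel(2) Im_cnj_self add_0_left)
  moreover have "E n v (Suc ?i) = E n v (Suc i)" by (metis E_mod mod_Suc_eq)
  ultimately show ?thesis by (simp add: E_mod)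
qed



definition cq :: "nat \<Rightarrow> (nat \<Rightarrow> complex) \<Rightarrow> nat \<Rightarrow> real" where
  "cq n v m = Re (cnj (E n v m) * E n v (Suc m)) / (cmod (E n v m) * cmod (E n v (Suc m)))"

definition qq :: "nat \<Rightarrow> (nat \<Rightarrow> complex) \<Rightarrow> nat \<Rightarrow> complex" where
  "qq n v m = E n v (Suc m) * cnj (E n v m) / complex_of_real (cmod (E n v m) * cmod (E n v (Suc m)))"

lemma interior_eq:
  assumes "1 \<le> n" shows "interior_angle n v i = arccos (- cq n v (i + n - 1))"
proof -
  have s: "Suc (i + n - 1) = i + n" using assms by simp
  have 1: "vtx n v (i + n - 1) - vtx n v i = - E n v (i + n - 1)"
    unfolding E_def s vtx_add_n by simp
  have 2: "vtx n v (i + 1) - vtx n v i = E n v (Suc (i + n - 1))"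
    unfolding s E_add_n by (simp add: E_def)
  show ?thesis unfolding interior_angle_def ang_def 1 2 cq_def
    by (simp add: minus_divide_left)
qed

lemma cq_mod: "cq n v (m mod n) = cq n v m"
  unfolding cq_def by (metis E_mod mod_Suc_eq)

lemma cq_bound: "\<bar>cq n v m\<bar> \<le> 1"
proof -
  let ?a = "E n v m" and ?b = "E n v (Suc m)"
  have "\<bar>Re (cnj ?a * ?b)\<bar> \<le> cmod ?a * cmod ?b"
    using abs_Re_le_cmod[of "cnj ?a * ?b"] by (simp add: norm_mult)
  then show ?thesis unfolding cq_def
    by (cases "cmod ?a * cmod ?b = 0") (simp_all add: abs_divide divide_le_eq_1)
qed

lemma cq_const:
  assumes c: "convex_ccw_polygon n v" and e: "equiangular n v"
  shows "cq n v m = cq n v (n - 1)"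
proof -
  have n: "3 \<le> n" using convex_n[OF c] .
  have key: "cq n v (i + n - 1) = cq n v (n - 1)" if i: "i < n" for i
  proof -
    have n0: "0 < n" using n by simp
    have "interior_angle n v i = interior_angle n v 0" using e[unfolded equiangular_def] i n0 by blast
    then have "arccos (- cq n v (i + n - 1)) = arccos (- cq n v (0 + n - 1))"
      using n by (simp only: interior_eq)
    then show ?thesis using cq_bound by (simp add: arccos_eq_iff)
  qed
  have "cq n v m = cq n v (m mod n)" by (simp add: cq_mod)
  also have "\<dots> = cq n v (n - 1)"
  proof (cases "m mod n = n - 1")
    case True then show ?thesis by simp
  next
    case False
    define r where "r = m mod n"
    have "r < n" using n by (simp add: r_def)
    then have lt: "r + 1 < n" using False unfolding r_def[symmetric] by linarith
    have "cq n v (r + 1 + n - 1) = cq n v (n - 1)" by (rule key[OF lt])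
    moreover have "cq n v (r + 1 + n - 1) = cq n v r"
    proof -
      have "r + 1 + n - 1 = r + n" by simp
      moreover have "cq n v (r + n) = cq n v r" by (metis cq_mod mod_add_self2 r_def mod_mod_trivial)
      ultimately show ?thesis by simp
    qed
    ultimately show ?thesis by (simp add: r_def)
  qed
  finally show ?thesis .
qed

lemma qq_props:
  assumes c: "convex_ccw_polygon n v"
  shows "Re (qq n v m) = cq n v m" "Im (qq n v m) > 0" "cmod (qq n v m) = 1"
proof -
  let ?a = "E n v m" and ?b = "E n v (Suc m)"
  have a: "?a \<noteq> 0" and b: "?b \<noteq> 0" using E_nonzero[OF c] by auto
  then have p: "cmod ?a * cmod ?b > 0" by simp
  show "Re (qq n v m) = cq n v m" unfolding qq_def cq_def
    by (simp add: Re_divide_of_real mult.commute)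
  show "Im (qq n v m) > 0" unfolding qq_def
    using left_turn[OF c, of m] p by (simp add: Im_divide_of_real mult.commute)
  show "cmod (qq n v m) = 1" unfolding qq_def using a b
    by (simp add: norm_mult norm_divide)
qed

lemma unit_eq:
  assumes "cmod a = 1" "cmod b = 1" "Re a = Re b" "Im a > 0" "Im b > 0"
  shows "a = b"
proof -
  have ha: "(Im a)^2 = 1 - (Re a)^2" using cmod_power2[of a] assms(1) by simp
  have hb: "(Im b)^2 = 1 - (Re b)^2" using cmod_power2[of b] assms(2) by simp
  have "(Im a)^2 = (Im b)^2" using ha hb assms(3) by simp
  then have "Im a = Im b" by (rule power2_eq_imp_eq) (use assms in auto)
  then show ?thesis using assms complex_eqI by blast
qed

lemma qq_const:
  assumes c: "convex_ccw_polygon n v" and e: "equiangular n v"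
  shows "qq n v m = qq n v 0"
  by (rule unit_eq) (simp_all add: qq_props[OF c] cq_const[OF c e, of m] cq_const[OF c e, of 0])

lemma unit_step:
  assumes c: "convex_ccw_polygon n v"
  shows "E n v (Suc m) / complex_of_real (cmod (E n v (Suc m))) = qq n v m * (E n v m / complex_of_real (cmod (E n v m)))"
proof -
  let ?a = "E n v m" and ?b = "E n v (Suc m)"
  have a: "?a \<noteq> 0" and b: "?b \<noteq> 0" using E_nonzero[OF c] by auto
  have sq: "cnj ?a * ?a = complex_of_real ((cmod ?a)^2)" by (metis complex_norm_square mult.commute)
  have sq2: "?a * cnj ?a = complex_of_real (cmod ?a) * complex_of_real (cmod ?a)"
    by (metis complex_norm_square of_real_mult power2_eq_square)
  show ?thesis unfolding qq_def using a b
    by (simp add: field_simps sq power2_eq_square sq2)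
qed



lemma Im_cis_mult: "Im (cis (-a) * D) = Im D * cos a - Re D * sin a"
  by (simp add: cis.code)

lemma turning_one:
  assumes c: "convex_ccw_polygon n v" and n5: "5 \<le> n"
    and u: "cmod u = 1" and q2: "2 \<le> qn" and qn: "2 * qn < n"
    and Ef: "\<And>m. E n v m = complex_of_real (cmod (E n v m)) * (u * cis (2*pi*real qn/real n * real m))"
  shows False
proof -
  define t where "t = 2*pi*real qn/real n"
  have Ef': "E n v m = complex_of_real (cmod (E n v m)) * (u * cis (t * real m))" for m
    using Ef unfolding t_def .
  have spos: "cmod (E n v m) > 0" for m using E_nonzero[OF c] by simp
  define l where "l = n div qn"
  have qpos: "qn > 0" using q2 by simp
  have l1: "qn * l \<le> n" unfolding l_def by (simp add: mult.commute)
  have l2: "n < qn * (l + 1)"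
  proof -
    have "n = qn * l + n mod qn" unfolding l_def by simp
    moreover have "n mod qn < qn" using qpos by simp
    ultimately show ?thesis by (simp add: algebra_simps)
  qed
  have lge: "2 \<le> l"
  proof -
    have "2 * qn div qn \<le> n div qn" by (rule div_le_mono) (use qn in simp)
    then show ?thesis using qpos unfolding l_def by simp
  qed
  have lle: "l + 2 \<le> n"
  proof -
    have "n div qn \<le> n div 2" by (rule div_le_mono2) (use q2 in auto)
    then show ?thesis using n5 unfolding l_def by linarith
  qed
  define D where "D = cnj u * (vtx n v 0 - vtx n v (l + 1))"
  have cu: "cnj u * u = 1" using u by (metis complex_norm_square mult.commute norm_one of_real_1 one_power2)
  have Ecnj: "cnj (E n v m) * z = complex_of_real (cmod (E n v m)) * (cis (- (t * real m)) * (cnj u * z))" for m z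
    by (subst Ef') (simp add: cis_cnj mult_ac)
  have F1: "Im (cis (- (t * real l)) * D) > 0"
  proof -
    have "Im (cnj (E n v l) * (vtx n v 0 - vtx n v l)) > 0"
      by (rule convex_left[OF c]) (use lle lge in auto)
    moreover have "vtx n v 0 - vtx n v l = (vtx n v 0 - vtx n v (l + 1)) + E n v l"
      by (simp add: E_def)
    ultimately have "Im (cnj (E n v l) * (vtx n v 0 - vtx n v (l + 1))) > 0"
      by (simp only: distrib_left plus_complex.sel(2) Im_cnj_self add_0_right)
    then have "Im (complex_of_real (cmod (E n v l)) * (cis (- (t * real l)) * D)) > 0"
      unfolding Ecnj D_def .
    then show ?thesis using spos[of l] by (simp add: zero_less_mult_iff)
  qed
  have F2: "Im (cis (- (t * real (l + 1))) * D) \<ge> 0"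
  proof (cases "l + 2 = n")
    case True
    have "vtx n v 0 = vtx n v (l + 2)" using True vtx_add_n[of n v 0] by simp
    then have "vtx n v 0 - vtx n v (l + 1) = E n v (l + 1)" by (simp add: E_def)
    then have "cnj (E n v (l+1)) * (vtx n v 0 - vtx n v (l + 1)) = complex_of_real (cmod (E n v (l+1))) * (cis (- (t * real (l+1))) * D)"
      unfolding Ecnj D_def by simp
    then have "Im (complex_of_real (cmod (E n v (l+1))) * (cis (- (t * real (l+1))) * D)) = 0"
      by (metis Im_cnj_self \<open>vtx n v 0 - vtx n v (l + 1) = E n v (l + 1)\<close>)
    then have "cmod (E n v (l+1)) * Im (cis (- (t * real (l+1))) * D) = 0" by simp
    then show ?thesis using spos[of "l+1"] by simp
  next
    case False
    have "Im (cnj (E n v (l+1)) * (vtx n v 0 - vtx n v (l+1))) > 0"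
      by (rule convex_left[OF c]) (use lle False in \<open>auto simp: mod_if\<close>)
    then have "Im (complex_of_real (cmod (E n v (l+1))) * (cis (- (t * real (l+1))) * D)) > 0"
      unfolding Ecnj D_def .
    then show ?thesis using spos[of "l+1"] by (simp add: zero_less_mult_iff)
  qed
  have F3: "Im D < 0"
  proof -
    have "Im (cnj (E n v 0) * (vtx n v (l+1) - vtx n v 0)) > 0"
      by (rule convex_left[OF c]) (use lle lge n5 in auto)
    then have "Im (complex_of_real (cmod (E n v 0)) * (cis (- (t * real 0)) * (cnj u * (vtx n v (l+1) - vtx n v 0)))) > 0"
      unfolding Ecnj .
    then have "Im (cnj u * (vtx n v (l+1) - vtx n v 0)) > 0" using spos[of 0] by (simp add: zero_less_mult_iff)
    moreover have "cnj u * (vtx n v (l+1) - vtx n v 0) = - D" by (simp add: D_def algebra_simps)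
    ultimately have "Im (- D) > 0" by (simp only:)
    then show ?thesis by simp
  qed
  define a1 where "a1 = t * real l"
  define a2 where "a2 = t * real (l + 1)"
  have tpos: "0 < t" and tpi: "t < pi" using qpos qn unfolding t_def by (auto simp: field_simps)
  have a21: "a2 - a1 = t" unfolding a1_def a2_def by (simp add: algebra_simps)
  have a1le: "a1 \<le> 2*pi"
  proof -
    have "real qn * real l \<le> real n" using l1 by (metis of_nat_le_iff of_nat_mult)
    then show ?thesis unfolding a1_def t_def using n5 by (simp add: field_simps)
  qed
  have a2gt: "2*pi < a2"
  proof -
    have "real n < real qn * (real l + 1)" using l2 by (metis of_nat_less_iff of_nat_mult of_nat_add of_nat_1)
    then have "2*pi*real n < 2*pi*(real qn * (real l + 1))" by simp
    then show ?thesis unfolding a2_def t_def using n5 by (simp add: field_simps)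
  qed
  have s1: "sin a1 \<le> 0"
  proof (cases "a1 = 2*pi")
    case True then show ?thesis by simp
  next
    case False
    then show ?thesis using a1le a21 a2gt tpi by (intro sin_le_zero) auto
  qed
  have s2: "sin a2 > 0"
  proof -
    have "sin (a2 - 2*pi) > 0" using a21 a2gt tpi a1le by (intro sin_gt_zero) auto
    then show ?thesis by (simp add: sin_diff)
  qed
  have st: "sin t > 0" using tpos tpi by (rule sin_gt_zero)
  let ?x = "Re D" and ?y = "Im D"
  have G1: "?y * cos a1 - ?x * sin a1 > 0" using F1 unfolding a1_def Im_cis_mult .
  have G2: "?y * cos a2 - ?x * sin a2 \<ge> 0" using F2 unfolding a2_def Im_cis_mult .
  have "sin a2 * (?y * cos a1 - ?x * sin a1) > 0" using s2 G1 by simp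
  moreover have "(- sin a1) * (?y * cos a2 - ?x * sin a2) \<ge> 0" using s1 G2 by (intro mult_nonneg_nonneg) auto
  ultimately have "sin a2 * (?y * cos a1 - ?x * sin a1) + (- sin a1) * (?y * cos a2 - ?x * sin a2) > 0" by linarith
  moreover have "sin a2 * (?y * cos a1 - ?x * sin a1) + (- sin a1) * (?y * cos a2 - ?x * sin a2) = ?y * sin (a2 - a1)"
    by (simp add: sin_diff algebra_simps)
  ultimately have "?y * sin t > 0" unfolding a21 by simp
  then show False using F3 st by (simp add: zero_less_mult_iff)
qed



lemma edge_form:
  assumes c: "convex_ccw_polygon n v" and e: "equiangular n v" and n5: "5 \<le> n"
  shows "\<exists>u. cmod u = 1 \<and> (\<forall>m. E n v m = complex_of_real (cmod (E n v m)) * (u * cis (2*pi*real m/real n)))"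
proof -
  define z where "z = qq n v 0"
  define U where "U m = E n v m / complex_of_real (cmod (E n v m))" for m
  define u where "u = U 0"
  have Enz: "E n v m \<noteq> 0" for m using E_nonzero[OF c] .
  have EU: "E n v m = complex_of_real (cmod (E n v m)) * U m" for m
    using Enz[of m] by (simp add: U_def)
  have Upow: "U m = z ^ m * u" for m
  proof (induction m)
    case 0 show ?case by (simp add: u_def)
  next
    case (Suc m)
    have "U (Suc m) = qq n v m * U m" unfolding U_def by (rule unit_step[OF c])
    also have "\<dots> = z * U m" unfolding z_def by (subst qq_const[OF c e, of m]) (rule refl)
    finally show ?case using Suc.IH by simp
  qed
  have cu: "cmod u = 1" using Enz[of 0] by (simp add: u_def U_def norm_divide)
  have cz: "cmod z = 1" and iz: "Im z > 0" using qq_props[OF c] by (auto simp: z_def)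
  have zn: "z ^ n = 1"
  proof -
    have "U n = U 0" unfolding U_def using E_add_n[of n v 0] by simp
    then have "z ^ n * u = u" using Upow[of n] by (simp add: u_def)
    moreover have "u \<noteq> 0" using cu by auto
    ultimately show ?thesis by simp
  qed
  obtain t where t0: "0 \<le> t" and t2: "t < 2*pi" and zt: "z = Complex (cos t) (sin t)"
    using complex_unimodular_polar[OF cz] by blast
  have zc: "z = cis t" using zt by (simp add: complex_eq_iff)
  have st: "sin t > 0" using iz zt by simp
  have tpos: "t > 0" using st t0 by (cases "t = 0") auto
  have tpi: "t < pi"
  proof (rule ccontr)
    assume "\<not> t < pi"
    then have "sin t \<le> 0" using t2 by (intro sin_le_zero) auto
    then show False using st by simp
  qed
  have "cis (real n * t) = 1" using zn by (simp add: zc DeMoivre)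
  then have "cos (real n * t) = 1" by (metis cis.sel(1) one_complex.sel(1))
  then obtain q :: int where q: "real n * t = of_int q * 2 * pi" by (auto simp: cos_one_2pi_int)
  have nt0: "real n * t > 0" using tpos n5 by simp
  have qpos: "q > 0"
  proof (rule ccontr)
    assume "\<not> q > 0"
    then have "of_int q * 2 * pi \<le> 0" by (simp add: mult_nonpos_nonneg)
    then show False using q nt0 by simp
  qed
  have q2n: "2 * q < int n"
  proof -
    have "real n * t < real n * pi" using tpi n5 by simp
    then have "of_int q * 2 * pi < real n * pi" using q by simp
    then have "of_int (2*q) < real n" by simp
    then show ?thesis by linarith
  qed
  define qn where "qn = nat q"
  have qnq: "real qn = of_int q" using qpos by (simp add: qn_def)
  have tq: "t = 2*pi*real qn/real n" using q n5 unfolding qnq by (simp add: field_simps)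
  have Ef: "E n v m = complex_of_real (cmod (E n v m)) * (u * cis (2*pi*real qn/real n * real m))" for m
  proof -
    have "U m = u * cis (t * real m)" using Upow[of m] by (simp add: zc DeMoivre mult.commute)
    then have "U m = u * cis (2*pi*real qn/real n * real m)" using tq by simp
    then show ?thesis by (subst EU[of m]) (simp only:)
  qed
  have "qn = 1"
  proof (rule ccontr)
    assume "qn \<noteq> 1"
    then have "2 \<le> qn" using qpos qn_def by linarith
    moreover have "2 * qn < n" using q2n qpos unfolding qn_def by linarith
    ultimately show False using turning_one[OF c n5 cu _ _ Ef] by blast
  qed
  have "E n v m = complex_of_real (cmod (E n v m)) * (u * cis (2*pi*real m/real n))" for m
  proof -
    have "2*pi*real qn/real n * real m = 2*pi*real m/real n" using \<open>qn = 1\<close> by simp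
    then show ?thesis using Ef[of m] by (simp only:)
  qed
  then show ?thesis using cu by blast
qed



definition ZZ :: "nat \<Rightarrow> nat \<Rightarrow> (nat \<Rightarrow> real) \<Rightarrow> nat \<Rightarrow> complex" where
  "ZZ n k S i = (\<Sum>t<k. complex_of_real (S (i+t)) * cis (2*pi*real t/real n))"

lemma cnj_cis_mult: "cnj (cis a) * cis a = 1"
  by (simp add: cis_cnj cis_mult)

lemma chord_eq:
  assumes Ef: "\<And>m. E n v m = complex_of_real (S m) * (u * cis (2*pi*real m/real n))"
  shows "vtx n v (i + k) - vtx n v i = u * cis (2*pi*real i/real n) * ZZ n k S i"
proof -
  have "vtx n v (i + k) - vtx n v i = (\<Sum>t<k. E n v (i + t))" by (rule telescope)
  also have "\<dots> = (\<Sum>t<k. u * cis (2*pi*real i/real n) * (complex_of_real (S (i+t)) * cis (2*pi*real t/real n)))"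
  proof (intro sum.cong refl)
    fix t
    have "cis (2*pi*real i/real n) * cis (2*pi*real t/real n) = cis (2*pi*real (i+t)/real n)"
      unfolding cis_mult by (rule arg_cong[where f=cis]) (simp add: add_divide_distrib[symmetric] algebra_simps)
    then show "E n v (i + t) = u * cis (2*pi*real i/real n) * (complex_of_real (S (i+t)) * cis (2*pi*real t/real n))"
      unfolding Ef by (simp add: mult_ac)
  qed
  also have "\<dots> = u * cis (2*pi*real i/real n) * ZZ n k S i"
    unfolding ZZ_def by (simp add: sum_distrib_left)
  finally show ?thesis .
qed

lemma ang_scale:
  assumes "p > 0"
  shows "arccos (Re (complex_of_real p * z) / (p * cmod z)) = arccos (Re z / cmod z)"
  using assms by simp

lemma chord_angles:
  assumes Ef: "\<And>m. E n v m = complex_of_real (S m) * (u * cis (2*pi*real m/real n))"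
    and cu: "cmod u = 1" and Sp: "\<And>m. S m > 0" and k: "1 \<le> k"
  shows "ang (vtx n v (i+1)) (vtx n v i) (vtx n v (i+k)) = arccos (Re (ZZ n k S i) / cmod (ZZ n k S i))"
    and "ang (vtx n v (i+k-1)) (vtx n v (i+k)) (vtx n v i) =
       arccos (Re (cis (- (2*pi*(real k - 1)/real n)) * ZZ n k S i) / cmod (ZZ n k S i))"
proof -
  have cu': "cnj u * u = 1" using cu by (metis complex_norm_square mult.commute norm_one of_real_1 one_power2)
  have C: "vtx n v (i + k) - vtx n v i = u * cis (2*pi*real i/real n) * ZZ n k S i" by (rule chord_eq[OF Ef])
  have E1: "vtx n v (i+1) - vtx n v i = E n v i" by (simp add: E_def)
  have cE: "cmod (E n v m) = S m" for m using Sp[of m] cu by (simp add: Ef norm_mult)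
  have cC: "cmod (vtx n v (i + k) - vtx n v i) = cmod (ZZ n k S i)" using cu by (simp add: C norm_mult)
  have "cnj (E n v i) * (vtx n v (i + k) - vtx n v i) = complex_of_real (S i) * ZZ n k S i"
  proof -
    have "cnj (E n v i) * (vtx n v (i + k) - vtx n v i) =
      complex_of_real (S i) * ((cnj u * u) * (cnj (cis (2*pi*real i/real n)) * cis (2*pi*real i/real n))) * ZZ n k S i"
      unfolding C Ef by (simp add: mult_ac)
    then show ?thesis by (simp only: cu' cnj_cis_mult mult_1_right mult_1_left)
  qed
  then show "ang (vtx n v (i+1)) (vtx n v i) (vtx n v (i+k)) = arccos (Re (ZZ n k S i) / cmod (ZZ n k S i))"
    unfolding ang_def E1 cE cC using Sp[of i] by (simp only: ang_scale)
  have s: "Suc (i + k - 1) = i + k" using k by simp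
  have E2: "vtx n v (i+k-1) - vtx n v (i+k) = - E n v (i+k-1)" unfolding E_def s by simp
  have "cnj (- E n v (i+k-1)) * (vtx n v i - vtx n v (i + k)) =
     complex_of_real (S (i+k-1)) * (cis (- (2*pi*(real k - 1)/real n)) * ZZ n k S i)"
  proof -
    have "vtx n v i - vtx n v (i + k) = - (vtx n v (i + k) - vtx n v i)" by simp
    then have "cnj (- E n v (i+k-1)) * (vtx n v i - vtx n v (i + k)) = cnj (E n v (i+k-1)) * (vtx n v (i + k) - vtx n v i)"
      by (simp add: algebra_simps)
    also have "\<dots> = complex_of_real (S (i+k-1)) * ((cnj u * u) * (cnj (cis (2*pi*real (i+k-1)/real n)) * cis (2*pi*real i/real n))) * ZZ n k S i"
      unfolding C Ef by (simp add: mult_ac)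
    also have "cnj (cis (2*pi*real (i+k-1)/real n)) * cis (2*pi*real i/real n) = cis (- (2*pi*(real k - 1)/real n))"
      unfolding cis_cnj cis_mult using k by (intro arg_cong[where f=cis]) (cases "n = 0", simp_all add: of_nat_diff field_simps)
    finally show ?thesis using cu' by (simp add: mult_ac)
  qed
  moreover have "cmod (- E n v (i+k-1)) = S (i+k-1)" by (simp add: cE)
  moreover have "cmod (vtx n v i - vtx n v (i + k)) = cmod (ZZ n k S i)"
    using cC by (simp add: norm_minus_commute)
  ultimately show "ang (vtx n v (i+k-1)) (vtx n v (i+k)) (vtx n v i) =
       arccos (Re (cis (- (2*pi*(real k - 1)/real n)) * ZZ n k S i) / cmod (ZZ n k S i))"
    unfolding ang_def E2 using Sp[of "i+k-1"] by simp
qed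

lemma Y_parts:
  "Im (cis (- ((real k - 1)*pi/real n)) * ZZ n k S i) = (\<Sum>t<k. gw n k t * S (i+t))"
  "Re (cis (- ((real k - 1)*pi/real n)) * ZZ n k S i) = (\<Sum>t<k. S (i+t) * cos ((2*real t + 1 - real k)*pi/real n))"
proof -
  have e: "cis (- ((real k - 1)*pi/real n)) * (complex_of_real (S (i+t)) * cis (2*pi*real t/real n))
     = complex_of_real (S (i+t)) * cis ((2*real t + 1 - real k)*pi/real n)" for t
  proof -
    have "cis (- ((real k - 1)*pi/real n)) * cis (2*pi*real t/real n) = cis ((2*real t + 1 - real k)*pi/real n)"
      unfolding cis_mult by (intro arg_cong[where f=cis]) (simp add: diff_divide_distrib[symmetric] add_divide_distrib[symmetric] algebra_simps)
    then show ?thesis by (metis mult.left_commute)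
  qed
  show "Im (cis (- ((real k - 1)*pi/real n)) * ZZ n k S i) = (\<Sum>t<k. gw n k t * S (i+t))"
    unfolding ZZ_def sum_distrib_left e Im_sum by (simp add: gw_def mult.commute)
  show "Re (cis (- ((real k - 1)*pi/real n)) * ZZ n k S i) = (\<Sum>t<k. S (i+t) * cos ((2*real t + 1 - real k)*pi/real n))"
    unfolding ZZ_def sum_distrib_left e Re_sum by simp
qed

lemma eta_relation:
  fixes Z :: complex
  assumes k: "2 \<le> k" "2*k < n"
    and eq: "Re Z = Re (cis (- (2*pi*(real k - 1)/real n)) * Z)"
  shows "Im (cis (- ((real k - 1)*pi/real n)) * Z) = 0"
proof -
  define b where "b = (real k - 1)*pi/real n"
  have w: "cis (- (2*pi*(real k - 1)/real n)) = cis (-b) * cis (-b)"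
    unfolding b_def cis_mult by (intro arg_cong[where f=cis]) (cases "n = 0", simp_all add: field_simps)
  define Y where "Y = cis (-b) * Z"
  have Z: "Z = cis b * Y" unfolding Y_def by (simp add: cis_mult)
  have sb: "sin b > 0" unfolding b_def
  proof (rule sin_gt_zero)
    show "0 < (real k - 1) * pi / real n" using k by (simp add: field_simps)
    have "real k - 1 < real n" using k by linarith
    then have "(real k - 1) * pi < pi * real n" by simp
    then show "(real k - 1) * pi / real n < pi" using k by (simp add: divide_less_eq)
  qed
  have "Re (cis b * Y) = Re (cis (-b) * Y)"
    using eq unfolding w Z by (simp add: cis_mult mult.assoc[symmetric])
  then have "sin b * Im Y = 0" by (simp add: cis.code algebra_simps)
  then have "Im Y = 0" using sb by simp
  then show ?thesis unfolding Y_def b_def .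
qed

lemma ang_bound: "\<bar>Re z / cmod z\<bar> \<le> 1"
  using abs_Re_le_cmod[of z] by (cases "z = 0") (simp_all add: abs_divide divide_le_eq_1)

lemma gutkin_linear:
  assumes g: "gutkin n k v" and e: "equiangular n v" and k: "2 \<le> k" "2*k < n"
  shows "\<And>i. i < n \<Longrightarrow> gfun n k (side_lengths n v) i = 0"
proof -
  fix i assume i: "i < n"
  have c: "convex_ccw_polygon n v" using g unfolding gutkin_def by simp
  have n5: "5 \<le> n" using k by simp
  obtain u where cu: "cmod u = 1" and Ef0: "\<And>m. E n v m = complex_of_real (cmod (E n v m)) * (u * cis (2*pi*real m/real n))"
    using edge_form[OF c e n5] by blast
  define S where "S m = cmod (E n v m)" for m
  have Ef: "E n v m = complex_of_real (S m) * (u * cis (2*pi*real m/real n))" for m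
    unfolding S_def by (rule Ef0)
  have Sp: "S m > 0" for m using E_nonzero[OF c] by (simp add: S_def)
  obtain \<alpha> where al: "\<forall>i<n. ang (vtx n v (i + 1)) (vtx n v i) (vtx n v (i + k)) = \<alpha> \<and>
        ang (vtx n v (i + k - 1)) (vtx n v (i + k)) (vtx n v i) = \<alpha>"
    using g unfolding gutkin_def by blast
  have "arccos (Re (ZZ n k S i) / cmod (ZZ n k S i)) =
      arccos (Re (cis (- (2*pi*(real k - 1)/real n)) * ZZ n k S i) / cmod (ZZ n k S i))"
    using al i chord_angles[OF Ef cu Sp, of k i] k by simp
  moreover have "cmod (cis (- (2*pi*(real k - 1)/real n)) * ZZ n k S i) = cmod (ZZ n k S i)"
    by (simp add: norm_mult)
  ultimately have "Re (ZZ n k S i) / cmod (ZZ n k S i) = Re (cis (- (2*pi*(real k - 1)/real n)) * ZZ n k S i) / cmod (ZZ n k S i)"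
    using ang_bound[of "ZZ n k S i"] ang_bound[of "cis (- (2*pi*(real k - 1)/real n)) * ZZ n k S i"]
    by (simp add: arccos_eq_iff)
  then have "Re (ZZ n k S i) = Re (cis (- (2*pi*(real k - 1)/real n)) * ZZ n k S i)"
    by (cases "ZZ n k S i = 0") (simp_all add: norm_mult)
  then have "Im (cis (- ((real k - 1)*pi/real n)) * ZZ n k S i) = 0" by (rule eta_relation[OF k])
  then have "(\<Sum>t<k. gw n k t * S (i+t)) = 0" unfolding Y_parts .
  moreover have "side_lengths n v ((i + t) mod n) = S (i + t)" for t
  proof -
    have "(i+t) mod n < n" using n5 by simp
    then have "side_lengths n v ((i + t) mod n) = cmod (E n v ((i+t) mod n))"
      by (simp add: side_lengths_def E_def)
    then show ?thesis by (simp add: E_mod S_def)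
  qed
  ultimately show "gfun n k (side_lengths n v) i = 0" unfolding gfun_def by simp
qed



definition poly_of :: "nat \<Rightarrow> (nat \<Rightarrow> real) \<Rightarrow> nat \<Rightarrow> complex" where
  "poly_of n x i = (\<Sum>j<i. complex_of_real (x j) * cis (2*pi*real j/real n))"

lemma cis_mod_nat: "n > 0 \<Longrightarrow> cis (2*pi*real (m mod n)/real n) = cis (2*pi*real m/real n)"
  using cis_mod[of n 1 m] by simp

lemma poly_E:
  assumes n: "n > 0" and cl: "(\<Sum>j<n. complex_of_real (x j) * cis (2*pi*real j/real n)) = 0"
  shows "E n (poly_of n x) m = complex_of_real (x (m mod n)) * cis (2*pi*real m/real n)"
proof -
  let ?v = "poly_of n x"
  define m' where "m' = m mod n"
  have m': "m' < n" using n by (simp add: m'_def)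
  have "E n ?v m' = complex_of_real (x m') * cis (2*pi*real m'/real n)"
  proof (cases "Suc m' < n")
    case True
    then show ?thesis using m' by (simp add: E_def vtx_def poly_of_def)
  next
    case False
    then have s: "Suc m' = n" using m' by simp
    have "vtx n ?v (Suc m') = 0" unfolding s by (simp add: vtx_def poly_of_def)
    moreover have "vtx n ?v m' = - (complex_of_real (x m') * cis (2*pi*real m'/real n))"
    proof -
      have "(\<Sum>j<Suc m'. complex_of_real (x j) * cis (2*pi*real j/real n)) = 0" using cl s by simp
      then show ?thesis using m' by (simp add: vtx_def poly_of_def eq_neg_iff_add_eq_0)
    qed
    ultimately show ?thesis by (simp add: E_def)
  qed
  then show ?thesis unfolding m'_def E_mod cis_mod_nat[OF n] .
qed

lemma cnj_cis_cis: "cnj (cis a) * cis b = cis (b - a)"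
  by (simp add: cis_cnj cis_mult)

lemma real_sum_pos:
  fixes f :: "nat \<Rightarrow> real"
  assumes "finite A" "a \<in> A" "f a > 0" "\<And>t. t \<in> A \<Longrightarrow> f t \<ge> 0"
  shows "sum f A > 0"
  using assms member_le_sum[of a A f] by fastforce

lemma poly_convex_left:
  assumes n3: "3 \<le> n" and xp: "\<And>i. i < n \<Longrightarrow> x i > 0"
    and cl: "(\<Sum>j<n. complex_of_real (x j) * cis (2*pi*real j/real n)) = 0"
    and i: "i < n" and j: "j < n" "j \<noteq> i" "j \<noteq> Suc i mod n"
  shows "Im (cnj (E n (poly_of n x) i) * (vtx n (poly_of n x) j - vtx n (poly_of n x) i)) > 0"
proof -
  let ?v = "poly_of n x"
  have n: "n > 0" using n3 by simp
  define y where "y t = x ((i + t) mod n)" for t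
  have yp: "y t > 0" for t unfolding y_def using xp n by simp
  have Eit: "cnj (E n ?v i) * E n ?v (i + t) = complex_of_real (x i * y t) * cis (2*pi*real t/real n)" for t
  proof -
    have "cnj (E n ?v i) * E n ?v (i + t) = complex_of_real (x i * y t) * (cnj (cis (2*pi*real i/real n)) * cis (2*pi*real (i+t)/real n))"
      unfolding poly_E[OF n cl] y_def using i by (simp add: mult_ac)
    also have "cnj (cis (2*pi*real i/real n)) * cis (2*pi*real (i+t)/real n) = cis (2*pi*real t/real n)"
      unfolding cnj_cis_cis by (intro arg_cong[where f=cis]) (simp add: diff_divide_distrib[symmetric] algebra_simps)
    finally show ?thesis .
  qed
  define F where "F d = (\<Sum>t<d. y t * sin (2*pi*real t/real n))" for d
  have key: "Im (cnj (E n ?v i) * (vtx n ?v (i + d) - vtx n ?v i)) = x i * F d" for d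
    unfolding telescope sum_distrib_left Im_sum F_def Eit by (simp add: algebra_simps)
  have Fn: "F n = 0"
  proof -
    have "vtx n ?v (i + n) - vtx n ?v i = 0" by (simp add: vtx_add_n)
    then have "x i * F n = 0" using key[of n] by simp
    then show ?thesis using xp[OF i] by simp
  qed
  define d where "d = (j + n - i) mod n"
  have dj: "(i + d) mod n = j"
  proof -
    have "(i + d) mod n = (i + (j + n - i)) mod n" unfolding d_def by (simp add: mod_add_right_eq)
    also have "i + (j + n - i) = j + n" using i by simp
    finally show ?thesis using j by simp
  qed
  have d_lt: "d < n" using n by (simp add: d_def)
  have d2: "2 \<le> d"
  proof (rule ccontr)
    assume "\<not> 2 \<le> d"
    then have "d = 0 \<or> d = 1" by linarith
    then show False
    proof
      assume "d = 0" then show False using dj j i by simp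
    next
      assume "d = 1" then have "Suc i mod n = j" using dj by simp
      then show False using j by simp
    qed
  qed
  have vj: "vtx n ?v j = vtx n ?v (i + d)" using dj vtx_mod[of n ?v "i+d"] j by (simp add: vtx_def)
  have "F d > 0"
  proof (cases "2 * (d - 1) \<le> n")
    case True
    have s1: "sin (2*pi*real 1/real n) > 0"
    proof -
      have "sin (real 2 * pi / real n) > 0" by (rule sin_pos_frac) (use n3 in auto)
      then show ?thesis by (simp add: mult.commute)
    qed
    show ?thesis unfolding F_def
    proof (rule real_sum_pos[of _ 1])
      show "1 \<in> {..<d}" using d2 by simp
      show "0 < y 1 * sin (2*pi*real 1/real n)" using yp s1 by simp
      fix t assume "t \<in> {..<d}"
      then have "2 * t \<le> n" using True by simp
      then have "sin (2*pi*real t/real n) \<ge> 0"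
        by (intro sin_ge_zero) (use n in \<open>auto simp: field_simps\<close>)
      then show "0 \<le> y t * sin (2*pi*real t/real n)" using yp[of t] by simp
    qed simp
  next
    case False
    have split: "F n = F d + (\<Sum>t\<in>{d..<n}. y t * sin (2*pi*real t/real n))"
      unfolding F_def using d_lt
      by (simp add: atLeast0LessThan[symmetric] sum.atLeastLessThan_concat)
    have "(\<Sum>t\<in>{d..<n}. y t * sin (2*pi*real t/real n)) < 0"
    proof -
      have "(\<Sum>t\<in>{d..<n}. - (y t * sin (2*pi*real t/real n))) > 0"
      proof (rule real_sum_pos[of _ d])
        show "d \<in> {d..<n}" using d_lt by simp
        have "sin (2*pi*real d/real n) < 0"
          by (intro sin_lt_zero) (use False d_lt n in \<open>auto simp: field_simps\<close>)
        then show "0 < - (y d * sin (2*pi*real d/real n))" using yp[of d] by (simp add: mult_pos_neg)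
        fix t assume t: "t \<in> {d..<n}"
        have "sin (2*pi*real t/real n) < 0"
          by (intro sin_lt_zero) (use False t n in \<open>auto simp: field_simps\<close>)
        then show "0 \<le> - (y t * sin (2*pi*real t/real n))" using yp[of t] by (simp add: mult_pos_neg less_imp_le)
      qed simp
      then show ?thesis by (simp add: sum_negf)
    qed
    then show ?thesis using split Fn by simp
  qed
  then show ?thesis unfolding vj key using xp[OF i] by simp
qed



lemma realize:
  assumes k: "2 \<le> k" "2*k < n"
    and xp: "\<And>i. i < n \<Longrightarrow> x i > 0" and xz: "\<And>i. n \<le> i \<Longrightarrow> x i = 0"
    and cl: "(\<Sum>j<n. complex_of_real (x j) * cis (2*pi*real j/real n)) = 0"
    and g: "\<And>i. i < n \<Longrightarrow> gfun n k x i = 0"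
  shows "gutkin n k (poly_of n x) \<and> equiangular n (poly_of n x) \<and> side_lengths n (poly_of n x) = x"
proof -
  let ?v = "poly_of n x"
  have n5: "5 \<le> n" using k by simp
  have n3: "3 \<le> n" and n: "n > 0" using n5 by simp_all
  define S where "S m = x (m mod n)" for m
  have Sp: "S m > 0" for m unfolding S_def using xp n by simp
  have Ef: "E n ?v m = complex_of_real (S m) * (1 * cis (2*pi*real m/real n))" for m
    unfolding S_def poly_E[OF n cl] by simp
  have cE: "cmod (E n ?v m) = S m" for m using Sp[of m] by (simp add: Ef norm_mult)
  have conv: "convex_ccw_polygon n ?v"
    unfolding convex_ccw_polygon_def
  proof (intro conjI allI impI)
    show "3 \<le> n" by (rule n3)
  next
    fix i j assume i: "i < n" and j: "j < n" and ij: "i \<noteq> j"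
    show "?v i \<noteq> ?v j"
    proof (cases "j = Suc i mod n")
      case True
      have "?v j - ?v i = E n ?v i" using i j True by (simp add: E_def vtx_def)
      moreover have "E n ?v i \<noteq> 0" using cE[of i] Sp[of i] by auto
      ultimately show ?thesis by auto
    next
      case False
      have "Im (cnj (E n ?v i) * (vtx n ?v j - vtx n ?v i)) > 0"
        by (rule poly_convex_left[OF n3 xp cl i j]) (use ij False in auto)
      then show ?thesis using i j by (auto simp: vtx_def)
    qed
  next
    fix i j assume i: "i < n" and j: "j < n" "j \<noteq> i" "j \<noteq> (i + 1) mod n"
    have "Im (cnj (E n ?v i) * (vtx n ?v j - vtx n ?v i)) > 0"
      by (rule poly_convex_left[OF n3 xp cl i]) (use j in auto)
    then show "Im (cnj (vtx n ?v (i + 1) - vtx n ?v i) * (vtx n ?v j - vtx n ?v i)) > 0"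
      by (simp add: E_def)
  qed
  have cqc: "cq n ?v m = cos (2*pi/real n)" for m
  proof -
    have "cnj (E n ?v m) * E n ?v (Suc m) = complex_of_real (S m * S (Suc m)) * (cnj (cis (2*pi*real m/real n)) * cis (2*pi*real (Suc m)/real n))"
      unfolding Ef by (simp add: mult_ac)
    also have "cnj (cis (2*pi*real m/real n)) * cis (2*pi*real (Suc m)/real n) = cis (2*pi/real n)"
      unfolding cnj_cis_cis by (intro arg_cong[where f=cis]) (simp add: diff_divide_distrib[symmetric] algebra_simps)
    finally have "cnj (E n ?v m) * E n ?v (Suc m) = complex_of_real (S m * S (Suc m)) * cis (2*pi/real n)" .
    then show ?thesis unfolding cq_def cE using Sp[of m] Sp[of "Suc m"] by simp
  qed
  have eqa: "equiangular n ?v"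
    unfolding equiangular_def using n by (simp add: interior_eq cqc)
  have gut: "gutkin n k ?v"
    unfolding gutkin_def
  proof (rule conjI[OF conv], rule exI[of _ "arccos (cos ((real k - 1)*pi/real n))"], intro allI impI)
    fix i assume i: "i < n"
    define b where "b = (real k - 1)*pi/real n"
    define Y where "Y = cis (- b) * ZZ n k S i"
    have imY: "Im Y = 0"
    proof -
      have "Im Y = (\<Sum>t<k. gw n k t * S (i+t))" unfolding Y_def b_def by (rule Y_parts(1))
      also have "\<dots> = gfun n k x i" unfolding gfun_def S_def ..
      finally show ?thesis using g[OF i] by simp
    qed
    have reY: "Re Y > 0"
    proof -
      have "Re Y = (\<Sum>t<k. S (i+t) * cos ((2*real t + 1 - real k)*pi/real n))" unfolding Y_def b_def by (rule Y_parts(2))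
      also have "\<dots> > 0"
      proof (rule real_sum_pos[of _ 0])
        show "0 \<in> {..<k}" using k by simp
        have "\<And>t. t < k \<Longrightarrow> cos ((2*real t + 1 - real k)*pi/real n) > 0"
        proof -
          fix t assume t: "t < k"
          have "t + 1 \<le> k" using t by simp
          then have kt: "real t + 1 \<le> real k" by (metis of_nat_1 of_nat_add of_nat_le_iff)
          have "real (2*k) < real n" using k(2) by (simp only: of_nat_less_iff)
          then have kn: "2 * real k < real n" by simp
          have ex: "(2*real t + 1 - real k) * 2 = 4*real t + 2 - 2*real k" by (simp add: algebra_simps)
          have a1: "(2*real t + 1 - real k) * 2 < real n" unfolding ex using kt kn by linarith
          have a2: "- real n < (2*real t + 1 - real k) * 2" unfolding ex using kt kn by linarith
          show "cos ((2*real t + 1 - real k)*pi/real n) > 0"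
          proof (rule cos_gt_zero_pi)
            have "(2*real t + 1 - real k) * 2 * pi < real n * pi" using a1 by simp
            then show "(2*real t + 1 - real k)*pi/real n < pi/2" using n by (simp add: field_simps)
            have "- real n * pi < (2*real t + 1 - real k) * 2 * pi" using mult_strict_right_mono[OF a2 pi_gt_zero] by simp
            then show "-(pi/2) < (2*real t + 1 - real k)*pi/real n" using n by (simp add: field_simps)
          qed
        qed
        note cp = this
        have "0 < cos ((2*real 0 + 1 - real k)*pi/real n)" by (rule cp) (use k in simp)
        then show "0 < S (i+0) * cos ((2*real 0 + 1 - real k)*pi/real n)" using Sp[of "i+0"] by (simp only: mult_pos_pos)
        fix t assume "t \<in> {..<k}"
        then show "0 \<le> S (i+t) * cos ((2*real t + 1 - real k)*pi/real n)"
          using Sp[of "i+t"] \<open>\<And>t. t < k \<Longrightarrow> _\<close>[of t] by simp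
      qed simp
      finally show ?thesis .
    qed
    have Yr: "Y = complex_of_real (Re Y)" using imY by (simp add: complex_eq_iff)
    have Z: "ZZ n k S i = cis b * complex_of_real (Re Y)"
      using Yr unfolding Y_def by (metis cis_mult add.right_inverse cis_zero mult.assoc mult_1)
    have cZ: "cmod (ZZ n k S i) = Re Y" using reY by (simp add: Z norm_mult)
    have w: "cis (- (2*pi*(real k - 1)/real n)) * cis b = cis (- b)"
      unfolding cis_mult b_def by (intro arg_cong[where f=cis]) (cases "n = 0", simp_all add: field_simps)
    have A1: "ang (vtx n ?v (i+1)) (vtx n ?v i) (vtx n ?v (i+k)) = arccos (cos b)"
    proof -
      have "ang (vtx n ?v (i+1)) (vtx n ?v i) (vtx n ?v (i+k)) = arccos (Re (ZZ n k S i) / cmod (ZZ n k S i))"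
        by (rule chord_angles(1)[OF Ef _ Sp]) (use k in auto)
      then show ?thesis using reY by (simp add: Z norm_mult)
    qed
    have A2: "ang (vtx n ?v (i+k-1)) (vtx n ?v (i+k)) (vtx n ?v i) = arccos (cos b)"
    proof -
      have "cis (- (2*pi*(real k - 1)/real n)) * ZZ n k S i = cis (-b) * complex_of_real (Re Y)"
        unfolding Z by (simp add: w mult.assoc[symmetric])
      moreover have "ang (vtx n ?v (i+k-1)) (vtx n ?v (i+k)) (vtx n ?v i) =
       arccos (Re (cis (- (2*pi*(real k - 1)/real n)) * ZZ n k S i) / cmod (ZZ n k S i))"
        by (rule chord_angles(2)[OF Ef _ Sp]) (use k in auto)
      ultimately show ?thesis using reY by (simp add: cZ)
    qed
    show "ang (vtx n ?v (i + 1)) (vtx n ?v i) (vtx n ?v (i + k)) = arccos (cos ((real k - 1)*pi/real n)) \<and>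
          ang (vtx n ?v (i + k - 1)) (vtx n ?v (i + k)) (vtx n ?v i) = arccos (cos ((real k - 1)*pi/real n))"
      using A1 A2 unfolding b_def by simp
  qed
  have sl: "side_lengths n ?v = x"
  proof
    fix i show "side_lengths n ?v i = x i"
    proof (cases "i < n")
      case True
      have "cmod (vtx n ?v (i + 1) - vtx n ?v i) = S i" using cE[of i] by (simp add: E_def)
      then show ?thesis using True by (simp add: side_lengths_def S_def)
    next
      case False then show ?thesis using xz by (simp add: side_lengths_def)
    qed
  qed
  show ?thesis using gut eqa sl by simp
qed



lemma side_E: "i < n \<Longrightarrow> side_lengths n v i = cmod (E n v i)"
  by (simp add: side_lengths_def E_def)

lemma similar_iff:
  assumes gv: "gutkin n k v" "equiangular n v" and gw: "gutkin n k w" "equiangular n w" and n5: "5 \<le> n"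
  shows "similar_polys n v w \<longleftrightarrow> (\<exists>t>0. side_lengths n w = (\<lambda>i. t * side_lengths n v i))"
proof
  assume "similar_polys n v w"
  then obtain a b where a: "a \<noteq> 0" and wab: "\<And>i. i < n \<Longrightarrow> w i = a * v i + b"
    unfolding similar_polys_def by blast
  have vw: "vtx n w i = a * vtx n v i + b" for i using wab[of "i mod n"] n5 by (simp add: vtx_def)
  have "side_lengths n w = (\<lambda>i. cmod a * side_lengths n v i)"
  proof
    fix i
    have "vtx n w (i+1) - vtx n w i = a * (vtx n v (i+1) - vtx n v i)" by (simp add: vw algebra_simps)
    then show "side_lengths n w i = cmod a * side_lengths n v i"
      by (simp add: side_lengths_def norm_mult)
  qed
  then show "\<exists>t>0. side_lengths n w = (\<lambda>i. t * side_lengths n v i)" using a by (intro exI[of _ "cmod a"]) simp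
next
  assume "\<exists>t>0. side_lengths n w = (\<lambda>i. t * side_lengths n v i)"
  then obtain t where t: "t > 0" and sw: "side_lengths n w = (\<lambda>i. t * side_lengths n v i)" by blast
  have cv: "convex_ccw_polygon n v" and cw: "convex_ccw_polygon n w" using gv gw unfolding gutkin_def by auto
  obtain u where u: "cmod u = 1" and Ev: "\<And>m. E n v m = complex_of_real (cmod (E n v m)) * (u * cis (2*pi*real m/real n))"
    using edge_form[OF cv gv(2) n5] by blast
  obtain u' where u': "cmod u' = 1" and Ew: "\<And>m. E n w m = complex_of_real (cmod (E n w m)) * (u' * cis (2*pi*real m/real n))"
    using edge_form[OF cw gw(2) n5] by blast
  have cm: "cmod (E n w m) = t * cmod (E n v m)" for m
  proof -
    have "m mod n < n" using n5 by simp
    then have "cmod (E n w (m mod n)) = t * cmod (E n v (m mod n))"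
      using fun_cong[OF sw, of "m mod n"] by (simp add: side_E)
    then show ?thesis by (simp add: E_mod)
  qed
  define a where "a = complex_of_real t * u' / u"
  have un: "u \<noteq> 0" using u by auto
  have Ewa: "E n w m = a * E n v m" for m
  proof -
    have "E n w m = complex_of_real (t * cmod (E n v m)) * (u' * cis (2*pi*real m/real n))"
      by (subst Ew) (simp only: cm)
    also have "\<dots> = a * E n v m"
      by (subst (2) Ev) (simp add: a_def un field_simps)
    finally show ?thesis .
  qed
  have a0: "a \<noteq> 0" using t un u' unfolding a_def by auto
  have "\<forall>i<n. w i = a * v i + (w 0 - a * v 0)"
  proof (intro allI impI)
    fix i assume i: "i < n"
    have "vtx n w (0 + i) - vtx n w 0 = a * (vtx n v (0 + i) - vtx n v 0)"
      unfolding telescope Ewa by (simp add: sum_distrib_left)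
    then show "w i = a * v i + (w 0 - a * v 0)" using i n5 by (simp add: vtx_def algebra_simps)
  qed
  then show "similar_polys n v w" unfolding similar_polys_def using a0 by blast
qed



lemma hart0: "hart n 0 i = 1" by (simp add: hart_def)

lemma hart_sum_zero: "r < n \<Longrightarrow> r \<noteq> 0 \<Longrightarrow> (\<Sum>i<n. hart n r i) = 0"
  using hart_orth[of r n 0] by (simp add: hart0)

theorem mainTheorem12:
  fixes n k :: nat
  assumes "2 \<le> k" and "2 * k < n"
  shows "\<exists>(p :: nat \<Rightarrow> real) (b :: nat \<Rightarrow> nat \<Rightarrow> real).
     (\<forall>i\<ge>n. p i = 0) \<and> (\<forall>j<gutkin_M n k. \<forall>i\<ge>n. b j i = 0) \<and>
     (\<forall>c :: nat \<Rightarrow> real. (\<forall>i<n. (\<Sum>j<gutkin_M n k. c j * b j i) = 0) \<longrightarrow>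
         (\<forall>j<gutkin_M n k. c j = 0)) \<and>
     (\<forall>v. gutkin n k v \<and> equiangular n v \<longrightarrow>
         (\<exists>t>0. (\<lambda>i. t * side_lengths n v i) \<in> param_affine p b (gutkin_M n k))) \<and>
     (\<forall>x\<in>param_affine p b (gutkin_M n k). (\<forall>i<n. x i > 0) \<longrightarrow>
         (\<exists>v. gutkin n k v \<and> equiangular n v \<and> side_lengths n v = x)) \<and>
     (\<forall>x\<in>param_affine p b (gutkin_M n k). \<forall>t>0.
         (\<lambda>i. t * x i) \<in> param_affine p b (gutkin_M n k) \<longrightarrow> t = 1) \<and>
     (\<forall>v w. gutkin n k v \<and> equiangular n v \<longrightarrow> gutkin n k w \<and> equiangular n w \<longrightarrow>
         (similar_polys n v w \<longleftrightarrow> (\<exists>t>0. side_lengths n w = (\<lambda>i. t * side_lengths n v i))))"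
proof -
  have k: "2 \<le> k" "2 * k < n" using assms by auto
  have n5: "5 \<le> n" using assms by simp
  have n0: "n > 0" using n5 by simp
  define R where "R = {r. 2 \<le> r \<and> r \<le> n - 2 \<and> tan_cond n k r}"
  define M where "M = gutkin_M n k"
  have MR: "M = card R" unfolding M_def gutkin_M_def R_def ..
  have finR: "finite R" by (rule finite_subset[of _ "{..n}"]) (auto simp: R_def)
  obtain e where e: "bij_betw e {0..<M} R" using ex_bij_betw_nat_finite[OF finR] MR by blast
  have eR: "e j \<in> R" if "j < M" for j using e that by (auto simp: bij_betw_def)
  have Rprop: "r < n" "r \<noteq> 0" "mu n k r = 0" if "r \<in> R" for r
  proof -
    show "r < n" "r \<noteq> 0" using that n5 by (auto simp: R_def)
    show "mu n k r = 0" using that n5 mu_zero_iff[OF k, of r] by (auto simp: R_def)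
  qed
  have einj: "j = j'" if "j < M" "j' < M" "e j = e j'" for j j'
    using e that by (auto simp: bij_betw_def inj_on_def)
  have orth: "(\<Sum>i<n. hart n (e j) i * hart n (e j0) i) = (if j = j0 then real n else 0)"
    if "j < M" "j0 < M" for j j0
    using hart_orth[OF Rprop(1)[OF eR[OF that(1)]] Rprop(1)[OF eR[OF that(2)]]] einj[OF that] by auto
  define p :: "nat \<Rightarrow> real" where "p i = (if i < n then 1 else 0)" for i
  define b :: "nat \<Rightarrow> nat \<Rightarrow> real" where "b j i = (if i < n then hart n (e j) i else 0)" for j i
  define A where "A = param_affine p b M"
  have Aform: "x \<in> A \<longleftrightarrow> (\<exists>c. \<forall>i. x i = p i + (\<Sum>j<M. c j * b j i))" for x
    unfolding A_def param_affine_def by (auto simp: fun_eq_iff)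
  have C3: "\<forall>j<M. c j = 0" if h: "\<forall>i<n. (\<Sum>j<M. c j * b j i) = 0" for c
  proof (intro allI impI)
    fix j0 assume j0: "j0 < M"
    have "0 = (\<Sum>i<n. (\<Sum>j<M. c j * b j i) * hart n (e j0) i)" using h by simp
    also have "\<dots> = (\<Sum>i<n. (\<Sum>j<M. c j * (hart n (e j) i * hart n (e j0) i)))"
      by (intro sum.cong refl) (simp add: b_def sum_distrib_right mult.assoc)
    also have "\<dots> = (\<Sum>j<M. c j * (\<Sum>i<n. hart n (e j) i * hart n (e j0) i))"
      by (subst sum.swap) (simp add: sum_distrib_left)
    also have "\<dots> = (\<Sum>j<M. c j * (if j = j0 then real n else 0))"
      by (intro sum.cong refl) (simp add: orth j0)
    also have "\<dots> = c j0 * real n" using j0 by (simp add: if_distrib cong: if_cong)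
    finally show "c j0 = 0" using n0 by simp
  qed
  have sumA: "(\<Sum>i<n. x i) = real n" if "x \<in> A" for x
  proof -
    have "\<exists>c. \<forall>i. x i = p i + (\<Sum>j<M. c j * b j i)" using that by (simp only: Aform)
    then obtain c where c0: "\<forall>i. x i = p i + (\<Sum>j<M. c j * b j i)" by (elim exE)
    have c: "x i = p i + (\<Sum>j<M. c j * b j i)" for i using c0 by (rule spec)
    have "(\<Sum>i<n. x i) = (\<Sum>i<n. 1 + (\<Sum>j<M. c j * hart n (e j) i))"
      by (intro sum.cong refl) (simp add: c p_def b_def)
    also have "\<dots> = (\<Sum>i<n. 1) + (\<Sum>i<n. \<Sum>j<M. c j * hart n (e j) i)" by (rule sum.distrib)
    also have "(\<Sum>i<n. \<Sum>j<M. c j * hart n (e j) i) = (\<Sum>j<M. c j * (\<Sum>i<n. hart n (e j) i))"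
      by (subst sum.swap) (simp only: sum_distrib_left)
    also have "\<dots> = 0"
    proof (rule sum.neutral, rule ballI)
      fix j assume "j \<in> {..<M}"
      then have "e j \<in> R" using eR by simp
      then show "c j * (\<Sum>i<n. hart n (e j) i) = 0" using hart_sum_zero Rprop by simp
    qed
    finally show ?thesis by simp
  qed
  have C4: "\<exists>t>0. (\<lambda>i. t * side_lengths n v i) \<in> A" if gv: "gutkin n k v" "equiangular n v" for v
  proof -
    define s where "s = side_lengths n v"
    have cv: "convex_ccw_polygon n v" using gv unfolding gutkin_def by simp
    have spos: "s i > 0" if "i < n" for i
      using that E_nonzero[OF cv, of i] by (simp add: s_def side_E)
    have s0: "s i = 0" if "\<not> i < n" for i using that by (simp add: s_def side_lengths_def)
    have gl: "gfun n k s i = 0" if "i < n" for i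
      unfolding s_def by (rule gutkin_linear[OF gv k that])
    define h where "h r = (\<Sum>j<n. s j * hart n r j)" for r
    have hz: "h r = 0" if "r < n" "r \<noteq> 0" "r \<notin> R" for r
    proof -
      have mz: "mu n k r \<noteq> 0" using that mu_zero_iff[OF k that(1)] by (auto simp: R_def)
      have "\<And>i. i < n \<Longrightarrow> gfun n k s i = 0" using gl by blast
      from hart_coeff_zero[of n k s r, OF n0 this mz] show ?thesis unfolding h_def .
    qed
    have h0: "h 0 > 0" unfolding h_def hart0 using spos n0 by (intro sum_pos) auto
    have exp: "(\<Sum>r<n. h r * hart n r i) = h 0 + (\<Sum>j<M. h (e j) * hart n (e j) i)" for i
    proof -
      have sub: "insert 0 R \<subseteq> {..<n}" using Rprop n0 by auto
      have "(\<Sum>r<n. h r * hart n r i) = (\<Sum>r\<in>insert 0 R. h r * hart n r i)"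
      proof -
        have z: "\<forall>r\<in>{..<n} - insert 0 R. h r * hart n r i = 0"
        proof
          fix r assume r: "r \<in> {..<n} - insert 0 R"
          have "h r = 0" by (rule hz) (use r in auto)
          then show "h r * hart n r i = 0" by simp
        qed
        have "(\<Sum>r\<in>{..<n}. h r * hart n r i) = (\<Sum>r\<in>insert 0 R. h r * hart n r i)"
          by (rule sum.mono_neutral_right[OF _ sub z]) simp
        then show ?thesis by simp
      qed
      also have "\<dots> = h 0 * hart n 0 i + (\<Sum>r\<in>R. h r * hart n r i)"
        using finR Rprop(2) by (subst sum.insert) auto
      also have "(\<Sum>r\<in>R. h r * hart n r i) = (\<Sum>j\<in>{0..<M}. h (e j) * hart n (e j) i)"
        by (rule sum.reindex_bij_betw[OF e, symmetric])
      finally show ?thesis by (simp add: hart0 atLeast0LessThan)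
    qed
    define t where "t = real n / h 0"
    define c where "c j = h (e j) / h 0" for j
    have "(\<lambda>i. t * s i) = (\<lambda>i. p i + (\<Sum>j<M. c j * b j i))"
    proof
      fix i show "t * s i = p i + (\<Sum>j<M. c j * b j i)"
      proof (cases "i < n")
        case True
        have "s i = (\<Sum>r<n. h r * hart n r i) / real n"
          unfolding h_def by (rule hart_expand[OF True])
        then have "t * s i = (h 0 + (\<Sum>j<M. h (e j) * hart n (e j) i)) / h 0"
          unfolding exp t_def using n0 by simp
        also have "\<dots> = 1 + (\<Sum>j<M. c j * hart n (e j) i)"
          using h0 by (simp add: add_divide_distrib sum_divide_distrib c_def)
        finally show ?thesis using True by (simp add: p_def b_def)
      next
        case False then show ?thesis by (simp add: s0 p_def b_def)
      qed
    qed
    then have "(\<lambda>i. t * s i) \<in> A" unfolding Aform by (metis fun_eq_iff)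
    moreover have "t > 0" unfolding t_def using h0 n0 by simp
    ultimately show ?thesis unfolding s_def by blast
  qed
  have C5: "\<exists>v. gutkin n k v \<and> equiangular n v \<and> side_lengths n v = x"
    if xA: "x \<in> A" and xp: "\<forall>i<n. x i > 0" for x
  proof -
    have "\<exists>c. \<forall>i. x i = p i + (\<Sum>j<M. c j * b j i)" using xA by (simp only: Aform)
    then obtain c where c0: "\<forall>i. x i = p i + (\<Sum>j<M. c j * b j i)" by (elim exE)
    have c: "x i = p i + (\<Sum>j<M. c j * b j i)" for i using c0 by (rule spec)
    have xz: "x i = 0" if "n \<le> i" for i using that by (simp add: c p_def b_def)
    have xi: "x i = hart n 0 i + (\<Sum>j<M. c j * hart n (e j) i)" if "i < n" for i
      using that by (simp add: c p_def b_def hart0)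
    have gx: "gfun n k x i = 0" if "i < n" for i
    proof -
      have "gfun n k x i = (\<Sum>t<k. gw n k t * hart n 0 ((i+t) mod n) + (\<Sum>j<M. c j * (gw n k t * hart n (e j) ((i+t) mod n))))"
        unfolding gfun_def
      proof (intro sum.cong refl)
        fix t
        have "(i+t) mod n < n" using n0 by simp
        then show "gw n k t * x ((i + t) mod n) = gw n k t * hart n 0 ((i+t) mod n) + (\<Sum>j<M. c j * (gw n k t * hart n (e j) ((i+t) mod n)))"
          by (simp add: xi distrib_left sum_distrib_left mult_ac)
      qed
      also have "\<dots> = gfun n k (hart n 0) i + (\<Sum>j<M. c j * gfun n k (hart n (e j)) i)"
      proof -
        have sw: "(\<Sum>t<k. \<Sum>j<M. c j * (gw n k t * hart n (e j) ((i+t) mod n))) = (\<Sum>j<M. c j * (\<Sum>t<k. gw n k t * hart n (e j) ((i+t) mod n)))"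
          by (subst sum.swap) (simp only: sum_distrib_left)
        show ?thesis unfolding gfun_def sum.distrib sw ..
      qed
      also have "\<dots> = 0"
      proof -
        have "mu n k 0 = 0" using mu_zero_iff[OF k n0] by simp
        then have "gfun n k (hart n 0) i = 0" by (rule gfun_hart[OF n0])
        moreover have "gfun n k (hart n (e j)) i = 0" if "j < M" for j
          by (rule gfun_hart[OF n0 Rprop(3)[OF eR[OF that]]])
        ultimately show ?thesis by simp
      qed
      finally show ?thesis .
    qed
    have cl: "(\<Sum>j<n. complex_of_real (x j) * cis (2*pi*real j/real n)) = 0"
    proof -
      have mz: "mu n k (n - 1) \<noteq> 0" using mu_zero_iff[OF k, of "n - 1"] n5 by simp
      have "mu n k (n - 1) * (\<Sum>i<n. complex_of_real (x i) * cis (-2*pi*real (n - 1)*real i/real n)) = 0"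
        unfolding gfun_dft[OF n0, symmetric] by (simp add: gx)
      then have "(\<Sum>i<n. complex_of_real (x i) * cis (-2*pi*real (n - 1)*real i/real n)) = 0" using mz by simp
      moreover have "cis (-2*pi*real (n - 1)*real i/real n) = cis (2*pi*real i/real n)" for i
      proof -
        have eq: "-2*pi*real (n - 1)*real i/real n = 2*pi*real i/real n + 2*pi*of_int (- int i)"
          using n0 by (simp add: of_nat_diff field_simps)
        show ?thesis unfolding eq cis_int_period by (rule refl)
      qed
      ultimately show ?thesis by (simp only:)
    qed
    show ?thesis using realize[OF k _ xz cl gx] xp by blast
  qed
  have C6: "t = 1" if "x \<in> A" "t > 0" "(\<lambda>i. t * x i) \<in> A" for x t
  proof -
    have "(\<Sum>i<n. t * x i) = real n" using sumA[OF that(3)] by simp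
    moreover have "(\<Sum>i<n. t * x i) = t * real n" using sumA[OF that(1)] by (simp add: sum_distrib_left[symmetric])
    ultimately show ?thesis using n0 by simp
  qed
  have fin: "(\<forall>i\<ge>n. p i = 0) \<and> (\<forall>j<M. \<forall>i\<ge>n. b j i = 0) \<and>
     (\<forall>c :: nat \<Rightarrow> real. (\<forall>i<n. (\<Sum>j<M. c j * b j i) = 0) \<longrightarrow>
         (\<forall>j<M. c j = 0)) \<and>
     (\<forall>v. gutkin n k v \<and> equiangular n v \<longrightarrow>
         (\<exists>t>0. (\<lambda>i. t * side_lengths n v i) \<in> A)) \<and>
     (\<forall>x\<in>A. (\<forall>i<n. x i > 0) \<longrightarrow>
         (\<exists>v. gutkin n k v \<and> equiangular n v \<and> side_lengths n v = x)) \<and>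
     (\<forall>x\<in>A. \<forall>t>0.
         (\<lambda>i. t * x i) \<in> A \<longrightarrow> t = 1) \<and>
     (\<forall>v w. gutkin n k v \<and> equiangular n v \<longrightarrow> gutkin n k w \<and> equiangular n w \<longrightarrow>
         (similar_polys n v w \<longleftrightarrow> (\<exists>t>0. side_lengths n w = (\<lambda>i. t * side_lengths n v i))))"
  proof (intro conjI)
    show "\<forall>i\<ge>n. p i = 0" by (simp add: p_def)
    show "\<forall>j<M. \<forall>i\<ge>n. b j i = 0" by (simp add: b_def)
    show "\<forall>c :: nat \<Rightarrow> real. (\<forall>i<n. (\<Sum>j<M. c j * b j i) = 0) \<longrightarrow> (\<forall>j<M. c j = 0)"
      using C3 by blast
    show "\<forall>v. gutkin n k v \<and> equiangular n v \<longrightarrow> (\<exists>t>0. (\<lambda>i. t * side_lengths n v i) \<in> A)"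
      using C4 by blast
    show "\<forall>x\<in>A. (\<forall>i<n. x i > 0) \<longrightarrow> (\<exists>v. gutkin n k v \<and> equiangular n v \<and> side_lengths n v = x)"
      using C5 by blast
    show "\<forall>x\<in>A. \<forall>t>0. (\<lambda>i. t * x i) \<in> A \<longrightarrow> t = 1"
      using C6 by blast
    show "\<forall>v w. gutkin n k v \<and> equiangular n v \<longrightarrow> gutkin n k w \<and> equiangular n w \<longrightarrow>
         (similar_polys n v w \<longleftrightarrow> (\<exists>t>0. side_lengths n w = (\<lambda>i. t * side_lengths n v i)))"
      using similar_iff n5 by blast
  qed
  then show ?thesis unfolding M_def[symmetric] A_def
    by (intro exI[of _ p] exI[of _ b])
qed


end
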